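(* Let $X$ be a positive, finite-valued random variable with probability mass function $p_X$, and let $Y$ be such that conditionally on $\{X=x\}$, $Y\sim\mathrm{Exp}(x)$. Thus $Y$ has density $f_Y(y)=\sum_x p_X(x)\,x e^{-xy}$ for $y\ge0$. Define $$g(t):=E[X\mid Y\ge t]=\frac{\sum_x x e^{-tx}p_X(x)}{\sum_x e^{-tx}p_X(x)},\qquad t\ge0.$$ Consider the stationary continuous-time Poisson channel with feedback described in the context, with input $\{X_t\}_{t\in\mathbb{R}}$ and output $\{Y_t\}_{t\in\mathbb{R}}$. Then: 1. For every $t$ and every $x$, $$P\{X_t=x\}=\frac{(1/x)p_X(x)}{\sum_{x'}(1/x')p_X(x')},$$ and consequently $E[X_t\log X_t]=E[\log X]/E[1/X]$. 2. Let $\ell$ be the time of the most recent output event prior to time $0$, and set $\tau:=-\ell$. Then $\tau$ has density $$f_\tau(t)=\frac{\sum_x e^{-tx}p_X(x)}{E[1/X]},\qquad t\ge0.$$ 3. For $\tau$ distributed as in part 2, $$E[g(\tau)\log g(\tau)]=\frac{1-h(Y)}{E[1/X]},$$ where $h(Y)$ is the differential entropy of $Y$.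
   Context: **The channel.** The output $\{Y_t\}$ is a point process whose intensity at time $t$ is the input $X_t$. The input is piecewise constant and changes only at output events. At each output event, the input switches to a new value drawn according to $p_X$, independently of all channel inputs and outputs up to that time, and it stays at that value until the next output event. Hence, given that the input was set to $x$ at an event, the time to the next event is exponential with rate $x$. The pair of processes is taken to be jointly stationary on the whole real line. Logarithms are natural, and $h(Y)=-\int f_Y\log f_Y$. *)

theory Defs
  imports "HOL-Probability.Probability"
begin

definition cnt :: "('w \<Rightarrow> real set) \<Rightarrow> real \<Rightarrow> real \<Rightarrow> 'w \<Rightarrow> nat" where
  "cnt Ev a b \<omega> = card (Ev \<omega> \<inter> {a<..b})"

definition next_event :: "('w \<Rightarrow> real set) \<Rightarrow> real \<Rightarrow> 'w \<Rightarrow> real" where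
  "next_event Ev s \<omega> = Inf (Ev \<omega> \<inter> {s<..})"

definition history :: "'w measure \<Rightarrow> (real \<Rightarrow> 'w \<Rightarrow> real) \<Rightarrow> ('w \<Rightarrow> real set) \<Rightarrow> real \<Rightarrow> 'w set set" where
  "history M Xp Ev s = sigma_sets (space M)
     ({{\<omega> \<in> space M. Xp u \<omega> \<in> B} | u B. u \<le> s \<and> B \<in> sets borel} \<union>
      {{\<omega> \<in> space M. cnt Ev a b \<omega> = k} | a b k. a \<le> b \<and> b \<le> s})"

text \<open>Path space: input path and counting function of the output.\<close>
definition path_space :: "((real \<Rightarrow> real) \<times> (real \<times> real \<Rightarrow> nat)) measure" where
  "path_space = (Pi\<^sub>M UNIV (\<lambda>_. borel)) \<Otimes>\<^sub>M (Pi\<^sub>M UNIV (\<lambda>_. count_space UNIV))"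

definition jointly_stationary :: "'w measure \<Rightarrow> (real \<Rightarrow> 'w \<Rightarrow> real) \<Rightarrow> ('w \<Rightarrow> real set) \<Rightarrow> bool" where
  "jointly_stationary M Xp Ev \<longleftrightarrow> (\<forall>c::real.
     distr M path_space (\<lambda>\<omega>. (\<lambda>t. Xp t \<omega>, \<lambda>(a,b). cnt Ev a b \<omega>)) =
     distr M path_space (\<lambda>\<omega>. (\<lambda>t. Xp (t + c) \<omega>, \<lambda>(a,b). cnt Ev (a + c) (b + c) \<omega>)))"

text \<open>Stationary continuous-time Poisson channel with feedback (input switches at output events).\<close>
definition poisson_feedback_channel ::
  "real pmf \<Rightarrow> 'w measure \<Rightarrow> (real \<Rightarrow> 'w \<Rightarrow> real) \<Rightarrow> ('w \<Rightarrow> real set) \<Rightarrow> bool" where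
  "poisson_feedback_channel pX M Xp Ev \<longleftrightarrow>
     prob_space M \<and>
     (\<forall>t. Xp t \<in> borel_measurable M) \<and>
     (\<forall>a b. cnt Ev a b \<in> measurable M (count_space UNIV)) \<and>
     (\<forall>\<omega>\<in>space M. \<forall>a b. finite (Ev \<omega> \<inter> {a..b})) \<and>
     (\<forall>\<omega>\<in>space M. \<forall>t. Xp t \<omega> \<in> set_pmf pX) \<and>
     (\<forall>\<omega>\<in>space M. \<forall>u v. u \<le> v \<longrightarrow> Ev \<omega> \<inter> {u<..v} = {} \<longrightarrow> Xp u \<omega> = Xp v \<omega>) \<and>
     (\<forall>s A x w y. A \<in> history M Xp Ev s \<longrightarrow> 0 \<le> w \<longrightarrow>
        measure M {\<omega> \<in> space M. \<omega> \<in> A \<and> Xp s \<omega> = x \<and> Ev \<omega> \<inter> {s<..} \<noteq> {} \<and>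
                     next_event Ev s \<omega> - s > w \<and> Xp (next_event Ev s \<omega>) \<omega> = y}
        = measure M {\<omega> \<in> space M. \<omega> \<in> A \<and> Xp s \<omega> = x} * exp (- x * w) * pmf pX y) \<and>
     jointly_stationary M Xp Ev"

definition fY :: "real pmf \<Rightarrow> real \<Rightarrow> real" where
  "fY pX y = (\<Sum>x\<in>set_pmf pX. pmf pX x * x * exp (- x * y))"

definition gfun :: "real pmf \<Rightarrow> real \<Rightarrow> real" where
  "gfun pX t = (\<Sum>x\<in>set_pmf pX. x * exp (- t * x) * pmf pX x) / (\<Sum>x\<in>set_pmf pX. exp (- t * x) * pmf pX x)"

definition hY :: "real pmf \<Rightarrow> real" where
  "hY pX = - (LBINT y:{0..}. fY pX y * ln (fY pX y))"

end

theory Submission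
  imports Defs "HOL-Real_Asymp.Real_Asymp"
begin


locale pfc =
  fixes pX :: "real pmf" and M :: "'w measure"
    and Xp :: "real \<Rightarrow> 'w \<Rightarrow> real" and Ev :: "'w \<Rightarrow> real set"
  assumes fin: "finite (set_pmf pX)"
    and pos: "set_pmf pX \<subseteq> {0<..}"
    and chan: "poisson_feedback_channel pX M Xp Ev"
begin

lemma ps: "prob_space M" using chan unfolding poisson_feedback_channel_def by blast

sublocale prob_space M by (rule ps)

lemma Xmeas[measurable]: "Xp t \<in> borel_measurable M"
  using chan unfolding poisson_feedback_channel_def by blast
lemma Nmeas[measurable]: "cnt Ev a b \<in> measurable M (count_space UNIV)"
  using chan unfolding poisson_feedback_channel_def by blast
lemma locfin: "\<omega> \<in> space M \<Longrightarrow> finite (Ev \<omega> \<inter> {a..b})"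
  using chan unfolding poisson_feedback_channel_def by blast
lemma inS: "\<omega> \<in> space M \<Longrightarrow> Xp t \<omega> \<in> set_pmf pX"
  using chan unfolding poisson_feedback_channel_def by blast
lemma const: "\<omega> \<in> space M \<Longrightarrow> u \<le> v \<Longrightarrow> Ev \<omega> \<inter> {u<..v} = {} \<Longrightarrow> Xp u \<omega> = Xp v \<omega>"
  using chan unfolding poisson_feedback_channel_def by blast
lemma cond: "A \<in> history M Xp Ev s \<Longrightarrow> 0 \<le> w \<Longrightarrow>
        measure M {\<omega> \<in> space M. \<omega> \<in> A \<and> Xp s \<omega> = x \<and> Ev \<omega> \<inter> {s<..} \<noteq> {} \<and>
                     next_event Ev s \<omega> - s > w \<and> Xp (next_event Ev s \<omega>) \<omega> = y}
        = measure M {\<omega> \<in> space M. \<omega> \<in> A \<and> Xp s \<omega> = x} * exp (- x * w) * pmf pX y"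
  using chan unfolding poisson_feedback_channel_def by blast
lemma stat: "jointly_stationary M Xp Ev"
  using chan unfolding poisson_feedback_channel_def by blast

lemma finI: "\<omega> \<in> space M \<Longrightarrow> finite (Ev \<omega> \<inter> {a<..b})"
  by (rule finite_subset[OF _ locfin[of \<omega> a b]]) auto

lemma cnt0_iff: "\<omega> \<in> space M \<Longrightarrow> cnt Ev a b \<omega> = 0 \<longleftrightarrow> Ev \<omega> \<inter> {a<..b} = {}"
  using finI unfolding cnt_def by auto

lemma sets_N: "{\<omega>\<in>space M. P (cnt Ev a b \<omega>)} \<in> sets M"
proof -
  have "cnt Ev a b -` {k. P k} \<inter> space M \<in> sets M"
    by (rule measurable_sets[OF Nmeas]) simp
  moreover have "cnt Ev a b -` {k. P k} \<inter> space M = {\<omega>\<in>space M. P (cnt Ev a b \<omega>)}" by auto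
  ultimately show ?thesis by simp
qed

lemma sets_X: "{\<omega>\<in>space M. Xp t \<omega> = x} \<in> sets M"
  using measurable_sets[OF Xmeas, of "{x}" t] by (simp add: vimage_def Int_def conj_commute)

lemma hist_sub: "history M Xp Ev s \<subseteq> sets M"
  unfolding history_def
proof (rule sets.sigma_sets_subset)
  show "{{\<omega> \<in> space M. Xp u \<omega> \<in> B} |u B. u \<le> s \<and> B \<in> sets borel} \<union>
    {{\<omega> \<in> space M. cnt Ev a b \<omega> = k} |a b k. a \<le> b \<and> b \<le> s} \<subseteq> sets M"
  proof -
    have 1: "{\<omega> \<in> space M. Xp u \<omega> \<in> B} \<in> sets M" if "B \<in> sets borel" for u B
      using measurable_sets[OF Xmeas that, of u] by (simp add: vimage_def Int_def conj_commute)
    have 2: "{\<omega> \<in> space M. cnt Ev a b \<omega> = k} \<in> sets M" for a b k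
      by (rule sets_N)
    show ?thesis using 1 2 by blast
  qed
qed

lemma hist_empty: "{} \<in> history M Xp Ev s"
  unfolding history_def by (rule sigma_sets.Empty)

lemma hist_UN: "(\<And>i::nat. A i \<in> history M Xp Ev s) \<Longrightarrow> (\<Union>i. A i) \<in> history M Xp Ev s"
  unfolding history_def by (rule sigma_sets.Union)

lemma hist_genX: assumes "u \<le> s" "B \<in> sets borel"
  shows "{\<omega>\<in>space M. Xp u \<omega> \<in> B} \<in> history M Xp Ev s"
  unfolding history_def
  apply (rule sigma_sets.Basic)
  apply (rule UnI1)
  apply (simp only: mem_Collect_eq)
  apply (rule exI[of _ u], rule exI[of _ B])
  using assms by simp

lemma hist_genN: assumes "a \<le> b" "b \<le> s"
  shows "{\<omega>\<in>space M. cnt Ev a b \<omega> = k} \<in> history M Xp Ev s"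
  unfolding history_def
  apply (rule sigma_sets.Basic)
  apply (rule UnI2)
  apply (simp only: mem_Collect_eq)
  apply (rule exI[of _ a], rule exI[of _ b], rule exI[of _ k])
  using assms by simp

lemma hist_N: assumes "a \<le> b" "b \<le> s"
  shows "{\<omega>\<in>space M. P (cnt Ev a b \<omega>)} \<in> history M Xp Ev s"
proof -
  have C: "(if P k then {\<omega>\<in>space M. cnt Ev a b \<omega> = k} else {}) \<in> history M Xp Ev s" for k
    using hist_genN[OF assms] hist_empty by simp
  have "(\<Union>k. if P k then {\<omega>\<in>space M. cnt Ev a b \<omega> = k} else {}) \<in> history M Xp Ev s"
    by (rule hist_UN[OF C])
  moreover have "(\<Union>k. if P k then {\<omega>\<in>space M. cnt Ev a b \<omega> = k} else {}) = {\<omega>\<in>space M. P (cnt Ev a b \<omega>)}"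
    by (auto split: if_splits)
  ultimately show ?thesis by simp
qed

lemma hist_X: assumes "u \<le> s"
  shows "{\<omega>\<in>space M. Xp u \<omega> = x} \<in> history M Xp Ev s"
  using hist_genX[OF assms, of "{x}"] by simp

lemma hist_space: "space M \<in> history M Xp Ev s"
proof -
  have "space M - {} \<in> history M Xp Ev s" unfolding history_def
    by (rule sigma_sets.Compl) (rule sigma_sets.Empty)
  then show ?thesis by simp
qed

lemma hist_Diff: "A \<in> history M Xp Ev s \<Longrightarrow> space M - A \<in> history M Xp Ev s"
  unfolding history_def by (rule sigma_sets.Compl)

lemma hist_Un: "A \<in> history M Xp Ev s \<Longrightarrow> B \<in> history M Xp Ev s \<Longrightarrow> A \<union> B \<in> history M Xp Ev s"
  unfolding history_def by (rule sigma_sets_Un)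

lemma hist_sets: "A \<in> history M Xp Ev s \<Longrightarrow> A \<in> sets M"
  by (rule subsetD[OF hist_sub])

lemma hist_Int: assumes "A \<in> history M Xp Ev s" "B \<in> history M Xp Ev s"
  shows "A \<inter> B \<in> history M Xp Ev s"
proof -
  have "A \<subseteq> space M" "B \<subseteq> space M"
    using sets.sets_into_space[OF hist_sets[OF assms(1)]] sets.sets_into_space[OF hist_sets[OF assms(2)]] .
  then have "A \<inter> B = space M - ((space M - A) \<union> (space M - B))" by auto
  moreover have "space M - ((space M - A) \<union> (space M - B)) \<in> history M Xp Ev s"
    by (intro hist_Diff hist_Un assms)
  ultimately show ?thesis by simp
qed

end

context pfc begin

lemma next_props:
  assumes om: "\<omega> \<in> space M" and ne: "Ev \<omega> \<inter> {s<..} \<noteq> {}"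
  shows "next_event Ev s \<omega> \<in> Ev \<omega>" "s < next_event Ev s \<omega>"
    "\<And>e. e \<in> Ev \<omega> \<Longrightarrow> s < e \<Longrightarrow> next_event Ev s \<omega> \<le> e"
proof -
  obtain e0 where e0: "e0 \<in> Ev \<omega>" "s < e0" using ne by auto
  define F where "F = Ev \<omega> \<inter> {s<..e0}"
  have finF: "finite F" unfolding F_def using finI[OF om] .
  have neF: "F \<noteq> {}" using e0 unfolding F_def by auto
  define m where "m = Min F"
  have mF: "m \<in> F" unfolding m_def using finF neF by (rule Min_in)
  have mle: "m \<le> y" if "y \<in> F" for y unfolding m_def using finF that by simp
  have "Inf (Ev \<omega> \<inter> {s<..}) = m"
  proof (rule cInf_eq_minimum)
    show "m \<in> Ev \<omega> \<inter> {s<..}" using mF unfolding F_def by auto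
    fix y assume y: "y \<in> Ev \<omega> \<inter> {s<..}"
    show "m \<le> y"
    proof (cases "y \<le> e0")
      case True then show ?thesis using y mle unfolding F_def by auto
    next
      case False
      have "m \<le> e0" using mF unfolding F_def by auto
      then show ?thesis using False by simp
    qed
  qed
  then have nm: "next_event Ev s \<omega> = m" unfolding next_event_def by simp
  show "next_event Ev s \<omega> \<in> Ev \<omega>" "s < next_event Ev s \<omega>" using mF nm unfolding F_def by auto
  fix e assume "e \<in> Ev \<omega>" "s < e"
  then show "next_event Ev s \<omega> \<le> e" using nm mle mF unfolding F_def
    by (cases "e \<le> e0") fastforce+
qed

lemma next_gt_iff:
  assumes om: "\<omega> \<in> space M" and ne: "Ev \<omega> \<inter> {s<..} \<noteq> {}" and w: "0 \<le> w"
  shows "next_event Ev s \<omega> - s > w \<longleftrightarrow> cnt Ev s (s + w) \<omega> = 0"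
proof
  assume gt: "next_event Ev s \<omega> - s > w"
  show "cnt Ev s (s + w) \<omega> = 0"
  proof (rule ccontr)
    assume "cnt Ev s (s + w) \<omega> \<noteq> 0"
    then obtain e where "e \<in> Ev \<omega>" "s < e" "e \<le> s + w" using cnt0_iff[OF om] by auto
    then show False using next_props(3)[OF om ne, of e] gt by simp
  qed
next
  assume "cnt Ev s (s + w) \<omega> = 0"
  then have emp: "Ev \<omega> \<inter> {s<..s+w} = {}" using cnt0_iff[OF om] by simp
  show "next_event Ev s \<omega> - s > w"
  proof (rule ccontr)
    assume "\<not> next_event Ev s \<omega> - s > w"
    then have "next_event Ev s \<omega> \<in> Ev \<omega> \<inter> {s<..s+w}" using next_props(1,2)[OF om ne] by auto
    then show False using emp by auto
  qed
qed

lemma cnt_empty_after: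
  assumes om: "\<omega> \<in> space M" and e: "Ev \<omega> \<inter> {s<..} = {}"
  shows "cnt Ev s b \<omega> = 0"
  using e cnt0_iff[OF om, of s b] by auto

definition Eset where
  "Eset A s x w y = {\<omega> \<in> space M. \<omega> \<in> A \<and> Xp s \<omega> = x \<and> Ev \<omega> \<inter> {s<..} \<noteq> {} \<and>
                     next_event Ev s \<omega> - s > w \<and> Xp (next_event Ev s \<omega>) \<omega> = y}"

definition Gset where
  "Gset A s x w = {\<omega> \<in> space M. \<omega> \<in> A \<and> Xp s \<omega> = x \<and> Ev \<omega> \<inter> {s<..} \<noteq> {} \<and>
                     next_event Ev s \<omega> - s > w}"

definition Bset where
  "Bset A s x = {\<omega> \<in> space M. \<omega> \<in> A \<and> Xp s \<omega> = x}"

lemma Bset_sets: "A \<in> history M Xp Ev s \<Longrightarrow> Bset A s x \<in> sets M"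
proof -
  assume A: "A \<in> history M Xp Ev s"
  have "Bset A s x = A \<inter> {\<omega>\<in>space M. Xp s \<omega> = x}" unfolding Bset_def by auto
  then show ?thesis using hist_sets[OF A] sets_X by auto
qed

lemma Eset_meas:
  assumes A: "A \<in> history M Xp Ev s" and w: "0 \<le> w" and y: "y \<in> set_pmf pX"
    and mB: "measure M (Bset A s x) > 0"
  shows "Eset A s x w y \<in> sets M"
proof (rule ccontr)
  assume "Eset A s x w y \<notin> sets M"
  then have "measure M (Eset A s x w y) = 0" by (rule measure_notin_sets)
  moreover have "measure M (Eset A s x w y) = measure M (Bset A s x) * exp (- x * w) * pmf pX y"
    unfolding Eset_def Bset_def using cond[OF A w] .
  moreover have "measure M (Bset A s x) * exp (- x * w) * pmf pX y > 0"
    using mB pmf_positive[OF y] by simp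
  ultimately show False by linarith
qed

lemma Gset_meas:
  assumes A: "A \<in> history M Xp Ev s" and w: "0 \<le> w"
    and mB: "measure M (Bset A s x) > 0"
  shows "Gset A s x w \<in> sets M" "measure M (Gset A s x w) = measure M (Bset A s x) * exp (- x * w)"
proof -
  have eq: "Gset A s x w = (\<Union>y\<in>set_pmf pX. Eset A s x w y)"
    unfolding Gset_def Eset_def using inS by auto
  have Es: "(\<lambda>y. Eset A s x w y) ` set_pmf pX \<subseteq> sets M" using Eset_meas[OF A w _ mB] by auto
  show "Gset A s x w \<in> sets M" unfolding eq using Es fin by auto
  have "measure M (Gset A s x w) = (\<Sum>y\<in>set_pmf pX. measure M (Eset A s x w y))"
    unfolding eq
    by (rule finite_measure_finite_Union[OF fin Es]) (auto simp: disjoint_family_on_def Eset_def)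
  also have "\<dots> = (\<Sum>y\<in>set_pmf pX. measure M (Bset A s x) * exp (- x * w) * pmf pX y)"
    unfolding Eset_def Bset_def using cond[OF A w] by simp
  also have "\<dots> = measure M (Bset A s x) * exp (- x * w) * (\<Sum>y\<in>set_pmf pX. pmf pX y)"
    by (simp add: sum_distrib_left)
  also have "(\<Sum>y\<in>set_pmf pX. pmf pX y) = 1" using fin by (simp add: sum_pmf_eq_1)
  finally show "measure M (Gset A s x w) = measure M (Bset A s x) * exp (- x * w)" by simp
qed

lemma Fmain:
  assumes A: "A \<in> history M Xp Ev s" and w: "0 \<le> w"
  shows "measure M {\<omega>\<in>space M. \<omega> \<in> A \<and> Xp s \<omega> = x \<and> cnt Ev s (s + w) \<omega> = 0}
         = measure M (Bset A s x) * exp (- x * w)"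
proof (cases "measure M (Bset A s x) > 0")
  case False
  then have B0: "measure M (Bset A s x) = 0" using measure_nonneg[of M "Bset A s x"] by linarith
  have "measure M {\<omega>\<in>space M. \<omega> \<in> A \<and> Xp s \<omega> = x \<and> cnt Ev s (s + w) \<omega> = 0} \<le> measure M (Bset A s x)"
    by (rule finite_measure_mono[OF _ Bset_sets[OF A]]) (auto simp: Bset_def)
  then show ?thesis using B0 measure_nonneg[of M "{\<omega>\<in>space M. \<omega> \<in> A \<and> Xp s \<omega> = x \<and> cnt Ev s (s + w) \<omega> = 0}"]
    by simp
next
  case True
  note G = Gset_meas[OF A w True] Gset_meas[OF A order_refl True]
  define Z where "Z = Bset A s x - Gset A s x 0"
  have G0sub: "Gset A s x 0 \<subseteq> Bset A s x" unfolding Gset_def Bset_def by auto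
  have Zs: "Z \<in> sets M" unfolding Z_def using G(3) Bset_sets[OF A] by auto
  have Z0: "measure M Z = 0"
    unfolding Z_def using finite_measure_Diff[OF Bset_sets[OF A] G(3) G0sub] G(4) by simp
  have eq: "{\<omega>\<in>space M. \<omega> \<in> A \<and> Xp s \<omega> = x \<and> cnt Ev s (s + w) \<omega> = 0} = Gset A s x w \<union> Z"
  proof (intro equalityI subsetI)
    fix \<omega> assume om: "\<omega> \<in> {\<omega>\<in>space M. \<omega> \<in> A \<and> Xp s \<omega> = x \<and> cnt Ev s (s + w) \<omega> = 0}"
    show "\<omega> \<in> Gset A s x w \<union> Z"
    proof (cases "Ev \<omega> \<inter> {s<..} = {}")
      case True then show ?thesis using om unfolding Z_def Gset_def Bset_def by auto
    next
      case False then show ?thesis using om next_gt_iff[of \<omega> s w] w unfolding Z_def Gset_def Bset_def by auto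
    qed
  next
    fix \<omega> assume om: "\<omega> \<in> Gset A s x w \<union> Z"
    then have oms: "\<omega> \<in> space M" unfolding Z_def Gset_def Bset_def by auto
    show "\<omega> \<in> {\<omega>\<in>space M. \<omega> \<in> A \<and> Xp s \<omega> = x \<and> cnt Ev s (s + w) \<omega> = 0}"
    proof (cases "Ev \<omega> \<inter> {s<..} = {}")
      case True then show ?thesis using om oms cnt_empty_after[OF oms True, of "s+w"]
        unfolding Z_def Gset_def Bset_def by auto
    next
      case False
      then have "\<omega> \<in> Gset A s x w" using om next_props(2)[OF oms False] unfolding Z_def Gset_def Bset_def by auto
      then show ?thesis using next_gt_iff[OF oms False w] unfolding Gset_def by auto
    qed
  qed
  have disj: "Gset A s x w \<inter> Z = {}"
    unfolding Z_def Gset_def Bset_def using next_props(2) by auto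
  show ?thesis unfolding eq finite_measure_Union[OF G(1) Zs disj] G(2) Z0 by simp
qed

end

context pfc begin

lemma shift_meas: "(\<lambda>\<omega>. (\<lambda>t. Xp (t + c) \<omega>, \<lambda>(a,b). cnt Ev (a + c) (b + c) \<omega>)) \<in> measurable M path_space"
  unfolding path_space_def
proof (rule measurable_Pair)
  show "(\<lambda>\<omega>. \<lambda>t. Xp (t + c) \<omega>) \<in> measurable M (Pi\<^sub>M UNIV (\<lambda>_. borel))"
    by (rule measurable_PiM_single') auto
  show "(\<lambda>\<omega>. \<lambda>(a,b). cnt Ev (a + c) (b + c) \<omega>) \<in> measurable M (Pi\<^sub>M UNIV (\<lambda>_. count_space UNIV))"
  proof -
    have "(\<lambda>\<omega> i. (case i of (a,b) \<Rightarrow> cnt Ev (a + c) (b + c)) \<omega>) \<in> measurable M (Pi\<^sub>M UNIV (\<lambda>_. count_space UNIV))"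
      by (rule measurable_PiM_single') (auto split: prod.splits)
    moreover have "(\<lambda>\<omega> i. (case i of (a,b) \<Rightarrow> cnt Ev (a + c) (b + c)) \<omega>) = (\<lambda>\<omega>. \<lambda>(a,b). cnt Ev (a + c) (b + c) \<omega>)"
      by (auto simp: fun_eq_iff split: prod.splits)
    ultimately show ?thesis by simp
  qed
qed

lemma stat_eq: "distr M path_space (\<lambda>\<omega>. (\<lambda>t. Xp (t + 0) \<omega>, \<lambda>(a,b). cnt Ev (a + 0) (b + 0) \<omega>)) =
   distr M path_space (\<lambda>\<omega>. (\<lambda>t. Xp (t + c) \<omega>, \<lambda>(a,b). cnt Ev (a + c) (b + c) \<omega>))"
  using stat unfolding jointly_stationary_def by simp

lemma stat_set:
  assumes S: "S \<in> sets path_space"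
  shows "measure M ((\<lambda>\<omega>. (\<lambda>t. Xp (t + c) \<omega>, \<lambda>(a,b). cnt Ev (a + c) (b + c) \<omega>)) -` S \<inter> space M)
       = measure M ((\<lambda>\<omega>. (\<lambda>t. Xp (t + 0) \<omega>, \<lambda>(a,b). cnt Ev (a + 0) (b + 0) \<omega>)) -` S \<inter> space M)"
  using measure_distr[OF shift_meas S, of c] measure_distr[OF shift_meas S, of 0] stat_eq[of c] by simp

lemma statX:
  assumes B: "B \<in> sets borel"
  shows "measure M {\<omega>\<in>space M. Xp (t + c) \<omega> \<in> B} = measure M {\<omega>\<in>space M. Xp t \<omega> \<in> B}"
proof -
  have pm: "(\<lambda>p. fst p t) \<in> borel_measurable path_space"
    unfolding path_space_def
    by (rule measurable_compose[OF measurable_fst measurable_component_singleton]) simp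
  define S where "S = (\<lambda>p. fst p t) -` B \<inter> space path_space"
  have S: "S \<in> sets path_space" unfolding S_def by (rule measurable_sets[OF pm B])
  have sp: "(\<lambda>t. Xp (t + d) \<omega>, \<lambda>(a,b). cnt Ev (a + d) (b + d) \<omega>) \<in> space path_space" if "\<omega> \<in> space M" for \<omega> d
    using measurable_space[OF shift_meas that] .
  have e: "(\<lambda>\<omega>. (\<lambda>t. Xp (t + d) \<omega>, \<lambda>(a,b). cnt Ev (a + d) (b + d) \<omega>)) -` S \<inter> space M
      = {\<omega>\<in>space M. Xp (t + d) \<omega> \<in> B}" for d
    unfolding S_def using sp by auto
  show ?thesis using stat_set[OF S, of c] unfolding e by simp
qed

lemma statN:
  shows "measure M {\<omega>\<in>space M. P (cnt Ev (a + c) (b + c) \<omega>)} = measure M {\<omega>\<in>space M. P (cnt Ev a b \<omega>)}"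
proof -
  have pm: "(\<lambda>p. snd p (a,b)) \<in> measurable path_space (count_space UNIV)"
    unfolding path_space_def
    by (rule measurable_compose[OF measurable_snd measurable_component_singleton]) simp
  define S where "S = (\<lambda>p. snd p (a,b)) -` {k. P k} \<inter> space path_space"
  have S: "S \<in> sets path_space" unfolding S_def by (rule measurable_sets[OF pm]) simp
  have sp: "(\<lambda>t. Xp (t + d) \<omega>, \<lambda>(a,b). cnt Ev (a + d) (b + d) \<omega>) \<in> space path_space" if "\<omega> \<in> space M" for \<omega> d
    using measurable_space[OF shift_meas that] .
  have e: "(\<lambda>\<omega>. (\<lambda>t. Xp (t + d) \<omega>, \<lambda>(a,b). cnt Ev (a + d) (b + d) \<omega>)) -` S \<inter> space M
      = {\<omega>\<in>space M. P (cnt Ev (a + d) (b + d) \<omega>)}" for d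
    unfolding S_def using sp by auto
  show ?thesis using stat_set[OF S, of c] unfolding e by simp
qed

definition q where "q x = measure M {\<omega>\<in>space M. Xp 0 \<omega> = x}"

lemma qt: "measure M {\<omega>\<in>space M. Xp t \<omega> = x} = q x"
  using statX[of "{x}" 0 t] unfolding q_def by simp

lemma q_nonneg: "0 \<le> q x" unfolding q_def by simp

lemma q_out: "x \<notin> set_pmf pX \<Longrightarrow> q x = 0"
proof -
  assume "x \<notin> set_pmf pX"
  then have e: "{\<omega>\<in>space M. Xp 0 \<omega> = x} = {}" using inS by auto
  show "q x = 0" unfolding q_def by (subst e) simp
qed

lemma partition:
  assumes C: "C \<in> sets M"
  shows "measure M C = (\<Sum>x\<in>set_pmf pX. measure M (C \<inter> {\<omega>\<in>space M. Xp s \<omega> = x}))"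
proof -
  have e: "C = (\<Union>x\<in>set_pmf pX. C \<inter> {\<omega>\<in>space M. Xp s \<omega> = x})"
    using sets.sets_into_space[OF C] inS by auto
  have "measure M (\<Union>x\<in>set_pmf pX. C \<inter> {\<omega>\<in>space M. Xp s \<omega> = x})
     = (\<Sum>x\<in>set_pmf pX. measure M (C \<inter> {\<omega>\<in>space M. Xp s \<omega> = x}))"
    by (rule finite_measure_finite_Union[OF fin]) (auto simp: disjoint_family_on_def intro!: sets.Int C sets_X)
  then show ?thesis using e by simp
qed

lemma sum_q: "(\<Sum>x\<in>set_pmf pX. q x) = 1"
  using partition[OF sets.top, of 0] unfolding q_def
  by (simp add: Int_absorb1 prob_space)

definition Mx where "Mx = Max (set_pmf pX)"

lemma S_ne: "set_pmf pX \<noteq> {}" by (rule set_pmf_not_empty)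

lemma le_Mx: "x \<in> set_pmf pX \<Longrightarrow> x \<le> Mx" unfolding Mx_def using fin by simp
lemma S_pos: "x \<in> set_pmf pX \<Longrightarrow> 0 < x" using pos by auto
lemma Mx_pos: "0 < Mx" using S_ne le_Mx S_pos by force

lemma one_event_bound:
  assumes A: "A \<in> history M Xp Ev s" and w: "0 \<le> w"
  shows "measure M {\<omega>\<in>space M. \<omega> \<in> A \<and> cnt Ev s (s + w) \<omega> \<noteq> 0} \<le> measure M A * (Mx * w)"
proof -
  have As: "A \<in> sets M" by (rule hist_sets[OF A])
  define C0 where "C0 = {\<omega>\<in>space M. \<omega> \<in> A \<and> cnt Ev s (s + w) \<omega> = 0}"
  have C0s: "C0 \<in> sets M"
  proof -
    have "C0 = A \<inter> {\<omega>\<in>space M. cnt Ev s (s + w) \<omega> = 0}" unfolding C0_def by auto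
    then show ?thesis using As sets_N by auto
  qed
  have "measure M C0 = (\<Sum>x\<in>set_pmf pX. measure M (C0 \<inter> {\<omega>\<in>space M. Xp s \<omega> = x}))"
    by (rule partition[OF C0s])
  also have "\<dots> = (\<Sum>x\<in>set_pmf pX. measure M (Bset A s x) * exp (- x * w))"
  proof (rule sum.cong[OF refl])
    fix x
    have "C0 \<inter> {\<omega>\<in>space M. Xp s \<omega> = x} = {\<omega>\<in>space M. \<omega> \<in> A \<and> Xp s \<omega> = x \<and> cnt Ev s (s + w) \<omega> = 0}"
      unfolding C0_def by auto
    then show "measure M (C0 \<inter> {\<omega>\<in>space M. Xp s \<omega> = x}) = measure M (Bset A s x) * exp (- x * w)"
      using Fmain[OF A w, of x] by simp
  qed
  also have "\<dots> \<ge> (\<Sum>x\<in>set_pmf pX. measure M (Bset A s x) * exp (- Mx * w))"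
  proof (rule sum_mono)
    fix x assume x: "x \<in> set_pmf pX"
    have "exp (- Mx * w) \<le> exp (- x * w)" using le_Mx[OF x] w by (simp add: mult_right_mono)
    then show "measure M (Bset A s x) * exp (- Mx * w) \<le> measure M (Bset A s x) * exp (- x * w)"
      by (simp add: mult_left_mono)
  qed
  finally have C0ge: "measure M C0 \<ge> (\<Sum>x\<in>set_pmf pX. measure M (Bset A s x)) * exp (- Mx * w)"
    by (simp add: sum_distrib_right)
  have "Bset A s x = A \<inter> {\<omega>\<in>space M. Xp s \<omega> = x}" for x
    unfolding Bset_def by auto
  then have "(\<Sum>x\<in>set_pmf pX. measure M (Bset A s x)) = measure M A"
    using partition[OF As, of s] by simp
  then have C0ge': "measure M C0 \<ge> measure M A * exp (- Mx * w)" using C0ge by simp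
  have "{\<omega>\<in>space M. \<omega> \<in> A \<and> cnt Ev s (s + w) \<omega> \<noteq> 0} = A - C0"
    unfolding C0_def using sets.sets_into_space[OF As] by auto
  moreover have "measure M (A - C0) = measure M A - measure M C0"
    by (rule finite_measure_Diff[OF As C0s]) (auto simp: C0_def)
  moreover have "1 - exp (- Mx * w) \<le> Mx * w"
    using exp_ge_add_one_self[of "- Mx * w"] by simp
  then have "measure M A - measure M A * exp (- Mx * w) \<le> measure M A * (Mx * w)"
    using measure_nonneg[of M A] by (metis mult_left_mono right_diff_distrib' mult.right_neutral)
  ultimately show ?thesis using C0ge' by simp
qed

end

context pfc begin

lemma cnt_add:
  assumes om: "\<omega> \<in> space M" and "a \<le> b" "b \<le> c"
  shows "cnt Ev a c \<omega> = cnt Ev a b \<omega> + cnt Ev b c \<omega>"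
proof -
  have "Ev \<omega> \<inter> {a<..c} = (Ev \<omega> \<inter> {a<..b}) \<union> (Ev \<omega> \<inter> {b<..c})" using assms by auto
  moreover have "(Ev \<omega> \<inter> {a<..b}) \<inter> (Ev \<omega> \<inter> {b<..c}) = {}" by auto
  ultimately show ?thesis unfolding cnt_def using finI[OF om] by (simp add: card_Un_disjoint)
qed

lemma cnt_mono:
  assumes om: "\<omega> \<in> space M" and "a \<le> a'" "b' \<le> b"
  shows "cnt Ev a' b' \<omega> \<le> cnt Ev a b \<omega>"
  unfolding cnt_def by (rule card_mono[OF finI[OF om]]) (use assms in auto)

lemma two_elems:
  fixes X :: "real set"
  assumes "finite X" "2 \<le> card X"
  shows "\<exists>a\<in>X. \<exists>b\<in>X. a < b"
proof -
  have ne: "X \<noteq> {}" using assms by auto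
  have "Min X \<noteq> Max X"
  proof
    assume eq: "Min X = Max X"
    have "X \<subseteq> {Min X}"
    proof
      fix y assume "y \<in> X"
      then have "Min X \<le> y" "y \<le> Max X" using assms(1) by auto
      then show "y \<in> {Min X}" using eq by auto
    qed
    then have "card X \<le> card {Min X}" by (intro card_mono) auto
    then have "card X \<le> 1" by simp
    then show False using assms by simp
  qed
  moreover have "Min X \<le> Max X" using assms(1) ne by simp
  ultimately have "Min X < Max X" by simp
  then show ?thesis using Min_in[OF assms(1) ne] Max_in[OF assms(1) ne] by blast
qed

definition tt :: "real \<Rightarrow> nat \<Rightarrow> nat \<Rightarrow> real" where "tt d n k = real k * d / real n"

definition Dset where
  "Dset d n = {\<omega>\<in>space M. \<exists>k<n. 2 \<le> cnt Ev (tt d n k) (tt d n (Suc k)) \<omega>}"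

definition Aset where
  "Aset d n k = {\<omega>\<in>space M. cnt Ev 0 (tt d n k) \<omega> = 0 \<and> cnt Ev (tt d n k) (tt d n (Suc k)) \<omega> \<noteq> 0}"

lemma tt_mono: "0 \<le> d \<Longrightarrow> k \<le> k' \<Longrightarrow> tt d n k \<le> tt d n k'"
  unfolding tt_def by (intro divide_right_mono mult_right_mono) auto
lemma tt_0: "tt d n 0 = 0" unfolding tt_def by simp
lemma tt_n: "0 < n \<Longrightarrow> tt d n n = d" unfolding tt_def by simp
lemma tt_nonneg: "0 \<le> d \<Longrightarrow> 0 \<le> tt d n k" unfolding tt_def by simp

lemma Dset_sets: "Dset d n \<in> sets M"
proof -
  have "Dset d n = (\<Union>k\<in>{..<n}. {\<omega>\<in>space M. 2 \<le> cnt Ev (tt d n k) (tt d n (Suc k)) \<omega>})"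
    unfolding Dset_def by auto
  then show ?thesis using sets_N by auto
qed

lemma Aset_hist: "0 \<le> d \<Longrightarrow> Aset d n k \<in> history M Xp Ev (tt d n (Suc k))"
proof -
  assume d: "0 \<le> d"
  have "Aset d n k = {\<omega>\<in>space M. cnt Ev 0 (tt d n k) \<omega> = 0} \<inter> {\<omega>\<in>space M. cnt Ev (tt d n k) (tt d n (Suc k)) \<omega> \<noteq> 0}"
    unfolding Aset_def by auto
  moreover have "{\<omega>\<in>space M. cnt Ev 0 (tt d n k) \<omega> = 0} \<in> history M Xp Ev (tt d n (Suc k))"
    by (rule hist_N) (use tt_nonneg[OF d] tt_mono[OF d] in auto)
  moreover have "{\<omega>\<in>space M. cnt Ev (tt d n k) (tt d n (Suc k)) \<omega> \<noteq> 0} \<in> history M Xp Ev (tt d n (Suc k))"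
    by (rule hist_N) (use tt_mono[OF d] in auto)
  ultimately show ?thesis using hist_Int by simp
qed

lemma cnt_sum:
  assumes om: "\<omega> \<in> space M" and d: "0 \<le> d"
  shows "cnt Ev 0 (tt d n k) \<omega> = (\<Sum>i<k. cnt Ev (tt d n i) (tt d n (Suc i)) \<omega>)"
proof (induction k)
  case 0 then show ?case unfolding cnt_def by (simp add: tt_0)
next
  case (Suc k)
  have "cnt Ev 0 (tt d n (Suc k)) \<omega> = cnt Ev 0 (tt d n k) \<omega> + cnt Ev (tt d n k) (tt d n (Suc k)) \<omega>"
    by (rule cnt_add[OF om]) (use tt_nonneg[OF d] tt_mono[OF d] in auto)
  then show ?case using Suc by simp
qed

lemma two_incl:
  assumes om: "\<omega> \<in> space M" and d: "0 < d" and n: "0 < n"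
    and two: "2 \<le> cnt Ev 0 d \<omega>"
  shows "\<omega> \<in> Dset d n \<or> (\<exists>k<n. \<omega> \<in> Aset d n k \<and> cnt Ev (tt d n (Suc k)) d \<omega> \<noteq> 0)"
proof -
  let ?c = "\<lambda>i. cnt Ev (tt d n i) (tt d n (Suc i)) \<omega>"
  have sum: "cnt Ev 0 d \<omega> = (\<Sum>i<n. ?c i)" using cnt_sum[OF om, of d n n] d tt_n[OF n] by simp
  have ex: "\<exists>i. i < n \<and> ?c i \<noteq> 0"
  proof (rule ccontr)
    assume "\<not> ?thesis"
    then have "(\<Sum>i<n. ?c i) = 0" by simp
    then show False using sum two by simp
  qed
  define k where "k = (LEAST i. i < n \<and> ?c i \<noteq> 0)"
  have k: "k < n" "?c k \<noteq> 0" using LeastI_ex[OF ex] unfolding k_def by auto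
  have before: "?c i = 0" if "i < k" for i
    using not_less_Least[of i "\<lambda>i. i < n \<and> ?c i \<noteq> 0"] that k(1) unfolding k_def[symmetric] by auto
  have c0: "cnt Ev 0 (tt d n k) \<omega> = 0" using cnt_sum[OF om, of d n k] d before by simp
  show ?thesis
  proof (cases "2 \<le> ?c k")
    case True then show ?thesis using om k unfolding Dset_def by auto
  next
    case False
    then have c1: "?c k = 1" using k(2) by simp
    have "cnt Ev 0 (tt d n (Suc k)) \<omega> = 1"
      using cnt_sum[OF om, of d n "Suc k"] d cnt_sum[OF om, of d n k] c0 c1 by simp
    moreover have "cnt Ev 0 d \<omega> = cnt Ev 0 (tt d n (Suc k)) \<omega> + cnt Ev (tt d n (Suc k)) d \<omega>"
      by (rule cnt_add[OF om]) (use tt_nonneg[of d n] tt_mono[of d "Suc k" n n] tt_n[OF n] d k(1) in auto)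
    ultimately have "cnt Ev (tt d n (Suc k)) d \<omega> \<noteq> 0" using two by simp
    moreover have "\<omega> \<in> Aset d n k" unfolding Aset_def using om c0 k by auto
    ultimately show ?thesis using k by auto
  qed
qed

lemma Aset_disj:
  assumes d: "0 \<le> d"
  shows "disjoint_family_on (Aset d n) {..<n}"
  unfolding disjoint_family_on_def
proof (intro ballI impI)
  fix k k' assume "k \<in> {..<n}" "k' \<in> {..<n}" "k \<noteq> k'"
  have aux: "Aset d n k \<inter> Aset d n k' = {}" if "k < k'" for k k'
  proof -
    { fix \<omega> assume o1: "\<omega> \<in> Aset d n k" and o2: "\<omega> \<in> Aset d n k'"
      then have om: "\<omega> \<in> space M" unfolding Aset_def by auto
      have "cnt Ev (tt d n k) (tt d n (Suc k)) \<omega> \<le> cnt Ev 0 (tt d n k') \<omega>"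
        by (rule cnt_mono[OF om]) (use tt_nonneg[OF d] tt_mono[OF d] that in auto)
      then have False using o1 o2 unfolding Aset_def by auto }
    then show ?thesis by auto
  qed
  show "Aset d n k \<inter> Aset d n k' = {}"
    using aux[of k k'] aux[of k' k] \<open>k \<noteq> k'\<close> by (cases "k < k'") auto
qed

lemma R_bound_n:
  assumes d: "0 < d" and n: "0 < n"
  shows "measure M {\<omega>\<in>space M. 2 \<le> cnt Ev 0 d \<omega>} \<le> measure M (Dset d n) + (Mx * d)\<^sup>2"
proof -
  define H where "H k = {\<omega>\<in>space M. \<omega> \<in> Aset d n k \<and> cnt Ev (tt d n (Suc k)) d \<omega> \<noteq> 0}" for k
  have Asets: "Aset d n k \<in> sets M" for k using hist_sets[OF Aset_hist] d by simp
  have Hs: "H k \<in> sets M" for k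
  proof -
    have "H k = Aset d n k \<inter> {\<omega>\<in>space M. cnt Ev (tt d n (Suc k)) d \<omega> \<noteq> 0}" unfolding H_def by auto
    then show ?thesis using Asets sets_N by auto
  qed
  have sub: "{\<omega>\<in>space M. 2 \<le> cnt Ev 0 d \<omega>} \<subseteq> Dset d n \<union> (\<Union>k\<in>{..<n}. H k)"
  proof
    fix \<omega> assume "\<omega> \<in> {\<omega>\<in>space M. 2 \<le> cnt Ev 0 d \<omega>}"
    then have om: "\<omega> \<in> space M" and two: "2 \<le> cnt Ev 0 d \<omega>" by auto
    from two_incl[OF om d n two] show "\<omega> \<in> Dset d n \<union> (\<Union>k\<in>{..<n}. H k)"
    proof
      assume "\<exists>k<n. \<omega> \<in> Aset d n k \<and> cnt Ev (tt d n (Suc k)) d \<omega> \<noteq> 0"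
      then obtain k where "k < n" "\<omega> \<in> Aset d n k" "cnt Ev (tt d n (Suc k)) d \<omega> \<noteq> 0" by blast
      then have "\<omega> \<in> H k" unfolding H_def using om by simp
      then show ?thesis using \<open>k < n\<close> by blast
    qed simp
  qed
  have "measure M {\<omega>\<in>space M. 2 \<le> cnt Ev 0 d \<omega>} \<le> measure M (Dset d n \<union> (\<Union>k\<in>{..<n}. H k))"
    by (rule finite_measure_mono[OF sub]) (use Dset_sets Hs in auto)
  also have "\<dots> \<le> measure M (Dset d n) + measure M (\<Union>k\<in>{..<n}. H k)"
    by (rule measure_Un_le) (use Dset_sets Hs in auto)
  also have "measure M (\<Union>k\<in>{..<n}. H k) \<le> (\<Sum>k<n. measure M (H k))"
    by (rule finite_measure_subadditive_finite) (use Hs in auto)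
  also have "(\<Sum>k<n. measure M (H k)) \<le> (\<Sum>k<n. measure M (Aset d n k) * (Mx * d))"
  proof (rule sum_mono)
    fix k assume k: "k \<in> {..<n}"
    have le: "tt d n (Suc k) \<le> d" using tt_mono[of d "Suc k" n n] tt_n[OF n] d k by auto
    have "measure M {\<omega>\<in>space M. \<omega> \<in> Aset d n k \<and> cnt Ev (tt d n (Suc k)) (tt d n (Suc k) + (d - tt d n (Suc k))) \<omega> \<noteq> 0}
        \<le> measure M (Aset d n k) * (Mx * (d - tt d n (Suc k)))"
      by (rule one_event_bound[OF Aset_hist]) (use d le in auto)
    also have "\<dots> \<le> measure M (Aset d n k) * (Mx * d)"
      using tt_nonneg[of d n "Suc k"] d Mx_pos by (intro mult_left_mono) auto
    finally show "measure M (H k) \<le> measure M (Aset d n k) * (Mx * d)" unfolding H_def by simp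
  qed
  also have "(\<Sum>k<n. measure M (Aset d n k) * (Mx * d)) = measure M (\<Union>k\<in>{..<n}. Aset d n k) * (Mx * d)"
    by (subst finite_measure_finite_Union) (use Asets Aset_disj[of d n] d in \<open>auto simp: sum_distrib_right\<close>)
  also have "measure M (\<Union>k\<in>{..<n}. Aset d n k) \<le> measure M {\<omega>\<in>space M. \<omega> \<in> space M \<and> cnt Ev 0 (0 + d) \<omega> \<noteq> 0}"
  proof (rule finite_measure_mono)
    show "(\<Union>k\<in>{..<n}. Aset d n k) \<subseteq> {\<omega>\<in>space M. \<omega> \<in> space M \<and> cnt Ev 0 (0 + d) \<omega> \<noteq> 0}"
    proof
      fix \<omega> assume "\<omega> \<in> (\<Union>k\<in>{..<n}. Aset d n k)"
      then obtain k where k: "k < n" "\<omega> \<in> Aset d n k" by auto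
      then have om: "\<omega> \<in> space M" unfolding Aset_def by auto
      have "cnt Ev (tt d n k) (tt d n (Suc k)) \<omega> \<le> cnt Ev 0 d \<omega>"
        by (rule cnt_mono[OF om]) (use tt_nonneg[of d] tt_mono[of d "Suc k" n n] tt_n[OF n] d k in auto)
      then show "\<omega> \<in> {\<omega>\<in>space M. \<omega> \<in> space M \<and> cnt Ev 0 (0 + d) \<omega> \<noteq> 0}"
        using k om unfolding Aset_def by auto
    qed
    show "{\<omega>\<in>space M. \<omega> \<in> space M \<and> cnt Ev 0 (0 + d) \<omega> \<noteq> 0} \<in> sets M"
      using sets_N[of "\<lambda>k. k \<noteq> 0" 0 "0 + d"] by simp
  qed
  also have "measure M {\<omega>\<in>space M. \<omega> \<in> space M \<and> cnt Ev 0 (0 + d) \<omega> \<noteq> 0} \<le> measure M (space M) * (Mx * d)"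
    by (rule one_event_bound[OF hist_space]) (use d in auto)
  finally show ?thesis using Mx_pos d by (simp add: power2_eq_square mult_right_mono prob_space)
qed

end

context pfc begin

lemma tt_diff: "0 < n \<Longrightarrow> tt d n (Suc k) - tt d n k = d / real n"
  unfolding tt_def by (simp add: field_simps)

lemma D_eventually:
  assumes om: "\<omega> \<in> space M" and d: "0 < d"
  shows "\<exists>N. \<forall>n\<ge>N. \<omega> \<notin> Dset d n"
proof -
  define F where "F = Ev \<omega> \<inter> {0<..d}"
  have finF: "finite F" unfolding F_def by (rule finI[OF om])
  define P where "P = {(a,b). a \<in> F \<and> b \<in> F \<and> a < b}"
  have finP: "finite P" by (rule finite_subset[of _ "F \<times> F"]) (auto simp: P_def finF)
  define G where "G = insert 1 ((\<lambda>(a,b). b - a) ` P)"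
  have finG: "finite G" unfolding G_def using finP by simp
  define g where "g = Min G"
  have gpos: "0 < g" unfolding g_def using finG by (auto simp: G_def P_def)
  have gle: "g \<le> b - a" if "a \<in> F" "b \<in> F" "a < b" for a b
  proof -
    have "b - a \<in> G" unfolding G_def P_def using that by force
    then show ?thesis unfolding g_def using finG by simp
  qed
  obtain N :: nat where N: "d / g < real N" using reals_Archimedean2 by blast
  have "\<omega> \<notin> Dset d n" if n: "N \<le> n" for n
  proof
    assume "\<omega> \<in> Dset d n"
    then obtain k where k: "k < n" "2 \<le> cnt Ev (tt d n k) (tt d n (Suc k)) \<omega>" unfolding Dset_def by auto
    have npos: "0 < n" using k by simp
    have "\<exists>a\<in>Ev \<omega> \<inter> {tt d n k<..tt d n (Suc k)}. \<exists>b\<in>Ev \<omega> \<inter> {tt d n k<..tt d n (Suc k)}. a < b"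
      by (rule two_elems[OF finI[OF om]]) (use k in \<open>simp add: cnt_def\<close>)
    then obtain a b where ab: "a \<in> Ev \<omega>" "b \<in> Ev \<omega>" "tt d n k < a" "b \<le> tt d n (Suc k)" "a < b"
      "a \<le> tt d n (Suc k)" "tt d n k < b" by auto
    have t1: "0 \<le> tt d n k" using tt_nonneg d by simp
    have t2: "tt d n (Suc k) \<le> d" using tt_mono[of d "Suc k" n n] tt_n[OF npos] d k by simp
    have "a \<in> F" "b \<in> F" unfolding F_def using ab t1 t2 by auto
    then have gl: "g \<le> b - a" using gle ab by simp
    have ba: "b - a < d / real n" using ab tt_diff[OF npos, of d k] by simp
    have NposR: "0 < real N" using N d gpos by (smt (verit) divide_pos_pos)
    have dn: "d / real n \<le> d / real N"
      using NposR d n npos by (intro divide_left_mono) auto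
    have dg: "d / real N < g" using N gpos NposR by (simp add: field_simps)
    from gl ba dn dg have "g < g" by linarith
    then show False by simp
  qed
  then show ?thesis by blast
qed

lemma R_bound:
  assumes d: "0 < d"
  shows "measure M {\<omega>\<in>space M. 2 \<le> cnt Ev 0 d \<omega>} \<le> (Mx * d)\<^sup>2"
proof -
  define E where "E j = (\<Union>i. Dset d (Suc (i + j)))" for j
  have Es: "range E \<subseteq> sets M" unfolding E_def using Dset_sets by auto
  have dec: "decseq E" unfolding decseq_def E_def
  proof (intro allI impI subsetI)
    fix m n \<omega> assume "m \<le> n" "\<omega> \<in> (\<Union>i. Dset d (Suc (i + n)))"
    then obtain i where "\<omega> \<in> Dset d (Suc (i + n))" by auto
    then have "\<omega> \<in> Dset d (Suc ((i + (n - m)) + m))" using \<open>m \<le> n\<close> by simp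
    then show "\<omega> \<in> (\<Union>i. Dset d (Suc (i + m)))" by blast
  qed
  have empty: "(\<Inter>j. E j) = {}"
  proof (rule ccontr)
    assume "(\<Inter>j. E j) \<noteq> {}"
    then obtain \<omega> where o: "\<And>j. \<omega> \<in> E j" by auto
    then have om: "\<omega> \<in> space M" unfolding E_def Dset_def by blast
    obtain N where N: "\<And>n. N \<le> n \<Longrightarrow> \<omega> \<notin> Dset d n" using D_eventually[OF om d] by blast
    from o[of N] obtain i where "\<omega> \<in> Dset d (Suc (i + N))" unfolding E_def by auto
    then show False using N[of "Suc (i + N)"] by simp
  qed
  have lim: "(\<lambda>j. measure M (E j)) \<longlonglongrightarrow> 0"
    using finite_Lim_measure_decseq[OF Es dec] empty by simp
  have le: "measure M {\<omega>\<in>space M. 2 \<le> cnt Ev 0 d \<omega>} \<le> measure M (E j) + (Mx * d)\<^sup>2" for j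
  proof -
    have "measure M {\<omega>\<in>space M. 2 \<le> cnt Ev 0 d \<omega>} \<le> measure M (Dset d (Suc (0 + j))) + (Mx * d)\<^sup>2"
      by (rule R_bound_n[OF d]) simp
    also have "measure M (Dset d (Suc (0 + j))) \<le> measure M (E j)"
      proof (rule finite_measure_mono)
      show "Dset d (Suc (0 + j)) \<subseteq> E j" unfolding E_def by (intro UN_upper) simp
      show "E j \<in> sets M" using Es by auto
    qed
    finally show ?thesis by simp
  qed
  have lim2: "(\<lambda>j. measure M (E j) + (Mx * d)\<^sup>2) \<longlonglongrightarrow> 0 + (Mx * d)\<^sup>2"
    by (intro tendsto_add lim tendsto_const)
  show ?thesis using LIMSEQ_le_const[OF lim2] le by auto
qed

end

context pfc begin

definition lam where "lam = (\<Sum>x\<in>set_pmf pX. q x * x)"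

lemma Bset_space: "Bset (space M) s x = {\<omega>\<in>space M. Xp s \<omega> = x}"
  unfolding Bset_def by auto

lemma jump_meas:
  assumes x': "q x' > 0" and y: "y \<in> set_pmf pX" and d: "0 \<le> d"
  shows "Eset (space M) 0 x' 0 y - Eset (space M) 0 x' d y \<in> sets M"
    "measure M (Eset (space M) 0 x' 0 y - Eset (space M) 0 x' d y) = q x' * pmf pX y * (1 - exp (- x' * d))"
proof -
  have mB: "measure M (Bset (space M) 0 x') > 0" using x' unfolding Bset_space q_def .
  have E0: "Eset (space M) 0 x' 0 y \<in> sets M" by (rule Eset_meas[OF hist_space order_refl y mB])
  have Ed: "Eset (space M) 0 x' d y \<in> sets M" by (rule Eset_meas[OF hist_space d y mB])
  show "Eset (space M) 0 x' 0 y - Eset (space M) 0 x' d y \<in> sets M" using E0 Ed by auto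
  have sub: "Eset (space M) 0 x' d y \<subseteq> Eset (space M) 0 x' 0 y"
    unfolding Eset_def using d by auto
  have m0: "measure M (Eset (space M) 0 x' 0 y) = q x' * pmf pX y"
    using cond[OF hist_space order_refl, of 0 x' y] unfolding Eset_def q_def by simp
  have md: "measure M (Eset (space M) 0 x' d y) = q x' * exp (- x' * d) * pmf pX y"
    using cond[OF hist_space d, of 0 x' y] unfolding Eset_def q_def by simp
  show "measure M (Eset (space M) 0 x' 0 y - Eset (space M) 0 x' d y) = q x' * pmf pX y * (1 - exp (- x' * d))"
    using finite_measure_Diff[OF E0 Ed sub] m0 md by (simp add: algebra_simps)
qed

definition J where
  "J d x x' = (if q x' > 0 then Eset (space M) 0 x' 0 x - Eset (space M) 0 x' d x
               else {\<omega>\<in>space M. Xp 0 \<omega> = x'})"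

lemma J_props:
  assumes x: "x \<in> set_pmf pX" and d: "0 \<le> d"
  shows "J d x x' \<in> sets M" "measure M (J d x x') \<le> q x' * pmf pX x * (1 - exp (- x' * d))"
proof -
  show "J d x x' \<in> sets M" unfolding J_def using jump_meas[OF _ x d] sets_X by auto
  show "measure M (J d x x') \<le> q x' * pmf pX x * (1 - exp (- x' * d))"
  proof (cases "q x' > 0")
    case True then show ?thesis unfolding J_def using jump_meas[OF True x d] by simp
  next
    case False
    then have "q x' = 0" using q_nonneg[of x'] by simp
    then show ?thesis unfolding J_def using False q_def by simp
  qed
qed

lemma step_incl:
  assumes om: "\<omega> \<in> space M" and xd: "Xp d \<omega> = x" and d: "0 < d"
  shows "\<omega> \<in> {\<omega>\<in>space M. \<omega> \<in> space M \<and> Xp 0 \<omega> = x \<and> cnt Ev 0 (0 + d) \<omega> = 0}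
     \<union> (\<Union>x'\<in>set_pmf pX. J d x x') \<union> {\<omega>\<in>space M. 2 \<le> cnt Ev 0 d \<omega>}"
proof (cases "cnt Ev 0 d \<omega> = 0")
  case True
  then have "Ev \<omega> \<inter> {0<..d} = {}" using cnt0_iff[OF om] by simp
  then have "Xp 0 \<omega> = Xp d \<omega>" using const[OF om] d by simp
  then show ?thesis using om xd True by simp
next
  case False
  show ?thesis
  proof (cases "cnt Ev 0 d \<omega> = 1")
    case False2: True
    obtain e where e: "e \<in> Ev \<omega>" "0 < e" "e \<le> d" using False cnt0_iff[OF om] by auto
    then have ne: "Ev \<omega> \<inter> {0<..} \<noteq> {}" by auto
    define T where "T = next_event Ev 0 \<omega>"
    have T: "T \<in> Ev \<omega>" "0 < T" "T \<le> e" using next_props[OF om ne] e unfolding T_def by auto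
    have emp: "Ev \<omega> \<inter> {T<..d} = {}"
    proof (rule ccontr)
      assume "Ev \<omega> \<inter> {T<..d} \<noteq> {}"
      then obtain e' where e': "e' \<in> Ev \<omega>" "T < e'" "e' \<le> d" by auto
      have "{T, e'} \<subseteq> Ev \<omega> \<inter> {0<..d}" using T e e' by auto
      then have "card {T, e'} \<le> cnt Ev 0 d \<omega>" unfolding cnt_def by (intro card_mono finI[OF om])
      then show False using False2 e' by simp
    qed
    have XT: "Xp T \<omega> = x" using const[OF om _ emp] T e xd by simp
    define x' where "x' = Xp 0 \<omega>"
    have x'S: "x' \<in> set_pmf pX" unfolding x'_def by (rule inS[OF om])
    have "\<omega> \<in> J d x x'"
    proof (cases "q x' > 0")
      case True
      have "\<omega> \<in> Eset (space M) 0 x' 0 x" unfolding Eset_def using om ne T XT x'_def T_def by simp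
      moreover have "\<omega> \<notin> Eset (space M) 0 x' d x" unfolding Eset_def using T e T_def by auto
      ultimately show ?thesis unfolding J_def using True by simp
    next
      case False
      then show ?thesis unfolding J_def using om x'_def by simp
    qed
    then show ?thesis using x'S by blast
  next
    case False3: False
    then have "2 \<le> cnt Ev 0 d \<omega>" using False by simp
    then show ?thesis using om by simp
  qed
qed

lemma exp_lower: "0 \<le> (u::real) \<Longrightarrow> u / (1 + u) \<le> 1 - exp (- u)"
proof -
  assume u: "0 \<le> u"
  have "1 + u \<le> exp u" by simp
  then have "exp (- u) \<le> 1 / (1 + u)" using u by (simp add: exp_minus field_simps)
  moreover have "1 - 1 / (1 + u) = u / (1 + u)" using u by (simp add: field_simps)
  ultimately show ?thesis by simp
qed

lemma q_ineq_d:
  assumes x: "x \<in> set_pmf pX" and d: "0 < d"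
  shows "q x * x \<le> (1 + x * d) * (pmf pX x * lam + Mx\<^sup>2 * d)"
proof -
  define F1 where "F1 = {\<omega>\<in>space M. \<omega> \<in> space M \<and> Xp 0 \<omega> = x \<and> cnt Ev 0 (0 + d) \<omega> = 0}"
  define F2 where "F2 = (\<Union>x'\<in>set_pmf pX. J d x x')"
  define F3 where "F3 = {\<omega>\<in>space M. 2 \<le> cnt Ev 0 d \<omega>}"
  have F1s: "F1 \<in> sets M"
  proof -
    have "F1 = {\<omega>\<in>space M. Xp 0 \<omega> = x} \<inter> {\<omega>\<in>space M. cnt Ev 0 (0 + d) \<omega> = 0}" unfolding F1_def by auto
    then show ?thesis using sets_X sets_N by auto
  qed
  have F2s: "F2 \<in> sets M" unfolding F2_def using J_props(1)[OF x] d fin by auto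
  have F3s: "F3 \<in> sets M" unfolding F3_def by (rule sets_N)
  have "q x = measure M {\<omega>\<in>space M. Xp d \<omega> = x}" using qt by simp
  also have "\<dots> \<le> measure M (F1 \<union> F2 \<union> F3)"
    by (rule finite_measure_mono) (use step_incl[OF _ _ d] F1s F2s F3s in \<open>auto simp: F1_def F2_def F3_def\<close>)
  also have "\<dots> \<le> measure M (F1 \<union> F2) + measure M F3"
    by (rule measure_Un_le) (use F1s F2s F3s in auto)
  also have "measure M (F1 \<union> F2) \<le> measure M F1 + measure M F2"
    by (rule measure_Un_le) (use F1s F2s in auto)
  also have "measure M F1 = q x * exp (- x * d)"
    unfolding F1_def using Fmain[OF hist_space, of d 0 x] d unfolding Bset_space q_def by simp
  also have "measure M F2 \<le> (\<Sum>x'\<in>set_pmf pX. measure M (J d x x'))"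
    unfolding F2_def by (rule finite_measure_subadditive_finite[OF fin]) (use J_props(1)[OF x] d in auto)
  also have "\<dots> \<le> (\<Sum>x'\<in>set_pmf pX. q x' * pmf pX x * (x' * d))"
  proof (rule sum_mono)
    fix x' assume x': "x' \<in> set_pmf pX"
    have "1 - exp (- x' * d) \<le> x' * d" using exp_ge_add_one_self[of "- x' * d"] by simp
    then have "q x' * pmf pX x * (1 - exp (- x' * d)) \<le> q x' * pmf pX x * (x' * d)"
      by (intro mult_left_mono) (auto simp: q_nonneg)
    then show "measure M (J d x x') \<le> q x' * pmf pX x * (x' * d)"
      using J_props(2)[OF x, of d x'] d by simp
  qed
  also have "(\<Sum>x'\<in>set_pmf pX. q x' * pmf pX x * (x' * d)) = pmf pX x * lam * d"
    unfolding lam_def by (simp add: sum_distrib_left sum_distrib_right algebra_simps)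
  also have "measure M F3 \<le> (Mx * d)\<^sup>2" unfolding F3_def by (rule R_bound[OF d])
  finally have main: "q x \<le> q x * exp (- x * d) + pmf pX x * lam * d + (Mx * d)\<^sup>2" by simp
  have xpos: "0 < x" by (rule S_pos[OF x])
  have "q x * (x * d / (1 + x * d)) \<le> q x * (1 - exp (- x * d))"
    using exp_lower[of "x * d"] xpos d by (intro mult_left_mono) (auto simp: q_nonneg)
  also have "\<dots> \<le> pmf pX x * lam * d + (Mx * d)\<^sup>2" using main by (simp add: algebra_simps)
  finally have A: "q x * (x * d / (1 + x * d)) \<le> d * (pmf pX x * lam + Mx\<^sup>2 * d)"
    by (simp add: algebra_simps power2_eq_square)
  have pos: "0 < 1 + x * d" using xpos d by (simp add: add_pos_pos)
  have B: "q x * (x * d / (1 + x * d)) * (1 + x * d) \<le> d * (pmf pX x * lam + Mx\<^sup>2 * d) * (1 + x * d)"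
    by (rule mult_right_mono[OF A]) (use pos in simp)
  have C: "q x * (x * d / (1 + x * d)) * (1 + x * d) = d * (q x * x)" using pos by (simp add: field_simps)
  have "d * (q x * x) \<le> d * ((1 + x * d) * (pmf pX x * lam + Mx\<^sup>2 * d))"
    using B C by (simp add: algebra_simps)
  then show ?thesis using d by (simp add: mult_le_cancel_left_pos)
qed

lemma q_ineq:
  assumes x: "x \<in> set_pmf pX"
  shows "q x * x \<le> pmf pX x * lam"
proof -
  define f where "f n = (1 + x * (1 / real (Suc n))) * (pmf pX x * lam + Mx\<^sup>2 * (1 / real (Suc n)))" for n
  have l: "(\<lambda>n. 1 / real (Suc n)) \<longlonglongrightarrow> 0" by (rule LIMSEQ_Suc[OF lim_const_over_n])
  have "f \<longlonglongrightarrow> (1 + x * 0) * (pmf pX x * lam + Mx\<^sup>2 * 0)"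
    unfolding f_def by (intro tendsto_intros l)
  then have lim: "f \<longlonglongrightarrow> pmf pX x * lam" by simp
  have le: "q x * x \<le> f n" for n unfolding f_def by (rule q_ineq_d[OF x]) simp
  show ?thesis by (rule LIMSEQ_le_const[OF lim]) (use le in blast)
qed

lemma q_eq_lam:
  assumes x: "x \<in> set_pmf pX"
  shows "q x * x = pmf pX x * lam"
proof (rule ccontr)
  assume ne: "q x * x \<noteq> pmf pX x * lam"
  have "(\<Sum>x\<in>set_pmf pX. q x * x) < (\<Sum>x\<in>set_pmf pX. pmf pX x * lam)"
  proof (rule sum_strict_mono_ex1[OF fin])
    show "\<forall>x\<in>set_pmf pX. q x * x \<le> pmf pX x * lam" using q_ineq by blast
    have "q x * x < pmf pX x * lam" using q_ineq[OF x] ne by simp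
    then show "\<exists>a\<in>set_pmf pX. q a * a < pmf pX a * lam" using x by blast
  qed
  also have "(\<Sum>x\<in>set_pmf pX. pmf pX x * lam) = lam"
    using fin by (simp add: sum_distrib_right[symmetric] sum_pmf_eq_1)
  finally show False unfolding lam_def by simp
qed

definition Zs where "Zs = (\<Sum>x'\<in>set_pmf pX. (1 / x') * pmf pX x')"

lemma Zs_pos: "0 < Zs"
  unfolding Zs_def by (rule sum_pos[OF fin S_ne]) (auto simp: S_pos pmf_positive)

lemma q_formula: "q x = ((1 / x) * pmf pX x) / Zs"
proof (cases "x \<in> set_pmf pX")
  case False
  then show ?thesis using q_out by (simp add: set_pmf_iff)
next
  case True
  have qx: "q y = lam * ((1 / y) * pmf pX y)" if "y \<in> set_pmf pX" for y
    using q_eq_lam[OF that] S_pos[OF that] by (simp add: field_simps)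
  have "1 = (\<Sum>y\<in>set_pmf pX. q y)" using sum_q by simp
  also have "\<dots> = lam * Zs" unfolding Zs_def using qx by (simp add: sum_distrib_left)
  finally have "lam = 1 / Zs" using Zs_pos by (simp add: field_simps)
  then show ?thesis using qx[OF True] by simp
qed

end

context pfc begin

lemma EpX: "measure_pmf.expectation pX f = (\<Sum>x\<in>set_pmf pX. f x * pmf pX x)"
  by (rule integral_measure_pmf_real[OF fin]) auto

lemma Zs_eq: "Zs = measure_pmf.expectation pX (\<lambda>x. 1 / x)"
  unfolding Zs_def EpX ..

lemma part1: "measure M {\<omega> \<in> space M. Xp t \<omega> = x}
            = ((1 / x) * pmf pX x) / (\<Sum>x'\<in>set_pmf pX. (1 / x') * pmf pX x')"
  using qt q_formula unfolding Zs_def by simp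

lemma part2: "expectation (\<lambda>\<omega>. Xp t \<omega> * ln (Xp t \<omega>))
            = measure_pmf.expectation pX ln / measure_pmf.expectation pX (\<lambda>x. 1 / x)"
proof -
  have pw: "Xp t \<omega> * ln (Xp t \<omega>) = (\<Sum>x\<in>set_pmf pX. (x * ln x) * indicator {\<omega>\<in>space M. Xp t \<omega> = x} \<omega>)"
    if om: "\<omega> \<in> space M" for \<omega>
  proof -
    have "(\<Sum>x\<in>set_pmf pX. (x * ln x) * indicator {\<omega>\<in>space M. Xp t \<omega> = x} \<omega>)
        = (\<Sum>x\<in>set_pmf pX. if x = Xp t \<omega> then x * ln x else 0)"
      by (rule sum.cong) (auto simp: indicator_def om)
    also have "\<dots> = Xp t \<omega> * ln (Xp t \<omega>)" using inS[OF om] fin by (simp add: sum.delta)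
    finally show ?thesis by simp
  qed
  have "expectation (\<lambda>\<omega>. Xp t \<omega> * ln (Xp t \<omega>))
      = expectation (\<lambda>\<omega>. \<Sum>x\<in>set_pmf pX. (x * ln x) * indicator {\<omega>\<in>space M. Xp t \<omega> = x} \<omega>)"
    by (rule Bochner_Integration.integral_cong[OF refl]) (rule pw)
  also have "\<dots> = (\<Sum>x\<in>set_pmf pX. expectation (\<lambda>\<omega>. (x * ln x) * indicator {\<omega>\<in>space M. Xp t \<omega> = x} \<omega>))"
  proof (rule Bochner_Integration.integral_sum[where I="set_pmf pX" and f="\<lambda>x \<omega>. (x * ln x) * indicator {\<omega>\<in>space M. Xp t \<omega> = x} \<omega>"])
    fix x
    have "integrable M (indicator {\<omega>\<in>space M. Xp t \<omega> = x} :: 'w \<Rightarrow> real)"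
      by (rule integrable_real_indicator) (auto simp: sets_X emeasure_eq_measure)
    then show "integrable M (\<lambda>\<omega>. (x * ln x) * indicator {\<omega>\<in>space M. Xp t \<omega> = x} \<omega>)"
      by (rule integrable_mult_right)
  qed
  also have "\<dots> = (\<Sum>x\<in>set_pmf pX. (x * ln x) * q x)"
  proof (rule sum.cong[OF refl])
    fix x
    show "expectation (\<lambda>\<omega>. (x * ln x) * indicator {\<omega>\<in>space M. Xp t \<omega> = x} \<omega>) = (x * ln x) * q x"
      using qt[of t x] by (simp add: Int_absorb2)
  qed
  also have "\<dots> = (\<Sum>x\<in>set_pmf pX. ln x * pmf pX x) / Zs"
    unfolding q_formula sum_divide_distrib
    by (rule sum.cong[OF refl]) (use S_pos in \<open>auto simp: field_simps\<close>)
  finally show ?thesis unfolding Zs_eq EpX .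
qed

end

context pfc begin

lemma closed_iff:
  assumes om: "\<omega> \<in> space M"
  shows "Ev \<omega> \<inter> {a..b} \<noteq> {} \<longleftrightarrow> (\<forall>m::nat. cnt Ev (a - 1 / real (Suc m)) b \<omega> \<noteq> 0)"
proof
  assume "Ev \<omega> \<inter> {a..b} \<noteq> {}"
  then obtain e where e: "e \<in> Ev \<omega>" "a \<le> e" "e \<le> b" by auto
  show "\<forall>m::nat. cnt Ev (a - 1 / real (Suc m)) b \<omega> \<noteq> 0"
  proof
    fix m :: nat
    have "0 < 1 / real (Suc m)" by simp
    then have "a - 1 / real (Suc m) < e" using e(2) by linarith
    then have "e \<in> Ev \<omega> \<inter> {a - 1 / real (Suc m)<..b}" using e by auto
    then show "cnt Ev (a - 1 / real (Suc m)) b \<omega> \<noteq> 0" using cnt0_iff[OF om] by blast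
  qed
next
  assume all: "\<forall>m::nat. cnt Ev (a - 1 / real (Suc m)) b \<omega> \<noteq> 0"
  show "Ev \<omega> \<inter> {a..b} \<noteq> {}"
  proof
    assume emp: "Ev \<omega> \<inter> {a..b} = {}"
    define F where "F = Ev \<omega> \<inter> {a - 1<..b}"
    have finF: "finite F" unfolding F_def by (rule finI[OF om])
    have sub: "Ev \<omega> \<inter> {a - 1 / real (Suc m)<..b} \<subseteq> F" for m :: nat
    proof (rule subsetI)
      fix y assume "y \<in> Ev \<omega> \<inter> {a - 1 / real (Suc m)<..b}"
      then have y: "y \<in> Ev \<omega>" "a - 1 / real (Suc m) < y" "y \<le> b" by auto
      have "1 / real (Suc m) \<le> 1" by simp
      with y(2) have "a - 1 < y" by linarith
      then show "y \<in> F" unfolding F_def using y by auto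
    qed
    have ne: "F \<noteq> {}" using all[rule_format, of 0] cnt0_iff[OF om, of "a - 1" b] unfolding F_def by simp
    have Flt: "f < a" if "f \<in> F" for f using that emp unfolding F_def by force
    define f0 where "f0 = Max F"
    have f0: "f0 < a" unfolding f0_def using Max_in[OF finF ne] Flt by blast
    obtain m :: nat where m: "1 / (a - f0) < real (Suc m)"
      using reals_Archimedean2[of "1 / (a - f0)"] by (metis less_Suc_eq of_nat_less_iff order_less_trans)
    have "1 / real (Suc m) < a - f0" using m f0
      by (simp add: divide_less_eq field_simps)
    have "Ev \<omega> \<inter> {a - 1 / real (Suc m)<..b} \<noteq> {}"
      using all[rule_format, of m] cnt0_iff[OF om, of "a - 1 / real (Suc m)" b] by simp
    then obtain e where e: "e \<in> Ev \<omega> \<inter> {a - 1 / real (Suc m)<..b}" by blast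
    then have "e \<in> F" using sub by blast
    then have "e \<le> f0" unfolding f0_def using finF by simp
    with e \<open>1 / real (Suc m) < a - f0\<close> show False by auto
  qed
qed

lemma closed_sets: "{\<omega>\<in>space M. Ev \<omega> \<inter> {a..b} \<noteq> {}} \<in> sets M"
proof -
  have "{\<omega>\<in>space M. Ev \<omega> \<inter> {a..b} \<noteq> {}} = (\<Inter>m::nat. {\<omega>\<in>space M. cnt Ev (a - 1 / real (Suc m)) b \<omega> \<noteq> 0})"
  proof (intro equalityI subsetI)
    fix \<omega> assume "\<omega> \<in> {\<omega>\<in>space M. Ev \<omega> \<inter> {a..b} \<noteq> {}}"
    then show "\<omega> \<in> (\<Inter>m::nat. {\<omega>\<in>space M. cnt Ev (a - 1 / real (Suc m)) b \<omega> \<noteq> 0})"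
      using closed_iff[of \<omega> a b] by blast
  next
    fix \<omega> assume o: "\<omega> \<in> (\<Inter>m::nat. {\<omega>\<in>space M. cnt Ev (a - 1 / real (Suc m)) b \<omega> \<noteq> 0})"
    then have om: "\<omega> \<in> space M" by auto
    show "\<omega> \<in> {\<omega>\<in>space M. Ev \<omega> \<inter> {a..b} \<noteq> {}}"
      using closed_iff[OF om, of a b] o om by blast
  qed
  then show ?thesis using sets_N by auto
qed

lemma pt_null: "measure M {\<omega>\<in>space M. u \<in> Ev \<omega>} = 0"
proof -
  have eq: "{\<omega>\<in>space M. u \<in> Ev \<omega>} = {\<omega>\<in>space M. Ev \<omega> \<inter> {u..u} \<noteq> {}}" by auto
  have le: "measure M {\<omega>\<in>space M. u \<in> Ev \<omega>} \<le> Mx * (1 / real (Suc m))" for m :: nat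
  proof -
    have "measure M {\<omega>\<in>space M. u \<in> Ev \<omega>} \<le> measure M {\<omega>\<in>space M. cnt Ev (u - 1 / real (Suc m)) u \<omega> \<noteq> 0}"
      by (rule finite_measure_mono) (use closed_iff[of _ u u] sets_N in auto)
    also have "\<dots> = measure M {\<omega>\<in>space M. cnt Ev (0 + (u - 1 / real (Suc m))) (1 / real (Suc m) + (u - 1 / real (Suc m))) \<omega> \<noteq> 0}"
      by simp
    also have "\<dots> = measure M {\<omega>\<in>space M. cnt Ev 0 (1 / real (Suc m)) \<omega> \<noteq> 0}"
      by (rule statN)
    also have "\<dots> = measure M {\<omega>\<in>space M. \<omega> \<in> space M \<and> cnt Ev 0 (0 + 1 / real (Suc m)) \<omega> \<noteq> 0}" by simp
    also have "\<dots> \<le> measure M (space M) * (Mx * (1 / real (Suc m)))"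
      by (rule one_event_bound[OF hist_space]) simp
    finally show ?thesis by (simp add: prob_space)
  qed
  have l: "(\<lambda>m. Mx * (1 / real (Suc m))) \<longlonglongrightarrow> Mx * 0"
    by (intro tendsto_intros LIMSEQ_Suc[OF lim_const_over_n])
  have "measure M {\<omega>\<in>space M. u \<in> Ev \<omega>} \<le> 0"
    using LIMSEQ_le_const[OF l] le by auto
  then show ?thesis using measure_nonneg by (metis antisym)
qed

lemma pt_sets: "{\<omega>\<in>space M. u \<in> Ev \<omega>} \<in> sets M"
proof -
  have eq: "{\<omega>\<in>space M. u \<in> Ev \<omega>} = {\<omega>\<in>space M. Ev \<omega> \<inter> {u..u} \<noteq> {}}" by auto
  show ?thesis unfolding eq by (rule closed_sets)
qed

definition Wset where "Wset t = {\<omega>\<in>space M. Ev \<omega> \<inter> {-t..<0} \<noteq> {}}"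
definition NG where "NG = {\<omega>\<in>space M. Ev \<omega> \<inter> {..<0} = {}}"

lemma Wset_sets: "Wset t \<in> sets M"
proof -
  have "Wset t = (\<Union>k::nat. {\<omega>\<in>space M. Ev \<omega> \<inter> {-t.. - 1 / real (Suc k)} \<noteq> {}})"
  proof (intro equalityI subsetI)
    fix \<omega> assume "\<omega> \<in> Wset t"
    then obtain e where e: "\<omega> \<in> space M" "e \<in> Ev \<omega>" "-t \<le> e" "e < 0" unfolding Wset_def by auto
    obtain k :: nat where k: "1 / (- e) < real (Suc k)"
      using reals_Archimedean2[of "1 / (- e)"] by (metis less_Suc_eq of_nat_less_iff order_less_trans)
    then have "1 / real (Suc k) < - e" using e by (simp add: field_simps)
    then have "e \<in> Ev \<omega> \<inter> {-t.. - 1 / real (Suc k)}" using e by auto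
    then show "\<omega> \<in> (\<Union>k::nat. {\<omega>\<in>space M. Ev \<omega> \<inter> {-t.. - 1 / real (Suc k)} \<noteq> {}})" using e by blast
  next
    fix \<omega> assume "\<omega> \<in> (\<Union>k::nat. {\<omega>\<in>space M. Ev \<omega> \<inter> {-t.. - 1 / real (Suc k)} \<noteq> {}})"
    then obtain k :: nat and e where ke: "\<omega> \<in> space M" "e \<in> Ev \<omega>" "-t \<le> e" "e \<le> - 1 / real (Suc k)" by auto
    have "- 1 / real (Suc k) < 0" by simp
    with ke(4) have "e < 0" by linarith
    then have "e \<in> Ev \<omega> \<inter> {-t..<0}" "\<omega> \<in> space M" using ke by auto
    then show "\<omega> \<in> Wset t" unfolding Wset_def by blast
  qed
  then show ?thesis using closed_sets by auto
qed

lemma NG_eq: "NG = space M - (\<Union>k::nat. Wset (real k))"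
proof (intro equalityI subsetI)
  fix \<omega> assume "\<omega> \<in> NG" then show "\<omega> \<in> space M - (\<Union>k::nat. Wset (real k))"
    unfolding NG_def Wset_def by auto
next
  fix \<omega> assume o: "\<omega> \<in> space M - (\<Union>k::nat. Wset (real k))"
  show "\<omega> \<in> NG" unfolding NG_def
  proof (safe)
    show "\<omega> \<in> space M" using o by simp
  next
    fix e assume e: "e \<in> Ev \<omega>" "e < 0"
    obtain k :: nat where "- e < real k" using reals_Archimedean2 by blast
    then have "\<omega> \<in> Wset (real k)" unfolding Wset_def using o e by force
    then show "e \<in> {}" using o by blast
  qed
qed

lemma NG_sets: "NG \<in> sets M"
  unfolding NG_eq using Wset_sets by auto

lemma no_event_prob:
  assumes t: "0 \<le> t"
  shows "measure M {\<omega>\<in>space M. cnt Ev 0 t \<omega> = 0} = (\<Sum>x\<in>set_pmf pX. q x * exp (- x * t))"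
proof -
  have C: "{\<omega>\<in>space M. cnt Ev 0 t \<omega> = 0} \<in> sets M" by (rule sets_N)
  have "measure M {\<omega>\<in>space M. cnt Ev 0 t \<omega> = 0}
     = (\<Sum>x\<in>set_pmf pX. measure M ({\<omega>\<in>space M. cnt Ev 0 t \<omega> = 0} \<inter> {\<omega>\<in>space M. Xp 0 \<omega> = x}))"
    by (rule partition[OF C])
  also have "\<dots> = (\<Sum>x\<in>set_pmf pX. q x * exp (- x * t))"
  proof (rule sum.cong[OF refl])
    fix x
    have "{\<omega>\<in>space M. cnt Ev 0 t \<omega> = 0} \<inter> {\<omega>\<in>space M. Xp 0 \<omega> = x}
        = {\<omega>\<in>space M. \<omega> \<in> space M \<and> Xp 0 \<omega> = x \<and> cnt Ev 0 (0 + t) \<omega> = 0}" by auto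
    then show "measure M ({\<omega>\<in>space M. cnt Ev 0 t \<omega> = 0} \<inter> {\<omega>\<in>space M. Xp 0 \<omega> = x}) = q x * exp (- x * t)"
      using Fmain[OF hist_space t, of 0 x] unfolding Bset_space q_def by simp
  qed
  finally show ?thesis .
qed

lemma no_event_prob_neg:
  assumes t: "0 \<le> t"
  shows "measure M {\<omega>\<in>space M. cnt Ev (-t) 0 \<omega> = 0} = (\<Sum>x\<in>set_pmf pX. q x * exp (- x * t))"
proof -
  have "measure M {\<omega>\<in>space M. cnt Ev (-t) 0 \<omega> = 0} = measure M {\<omega>\<in>space M. cnt Ev (0 + -t) (t + -t) \<omega> = 0}"
    by simp
  also have "\<dots> = measure M {\<omega>\<in>space M. cnt Ev 0 t \<omega> = 0}" by (rule statN)
  finally show ?thesis using no_event_prob[OF t] by simp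
qed

definition mn where "mn = Min (set_pmf pX)"
lemma mn_le: "x \<in> set_pmf pX \<Longrightarrow> mn \<le> x" unfolding mn_def using fin by simp
lemma mn_pos: "0 < mn" unfolding mn_def using fin S_ne S_pos by simp

lemma NG_null: "measure M NG = 0"
proof -
  have le: "measure M NG \<le> exp (- mn * real k)" for k :: nat
  proof -
    have "measure M NG \<le> measure M {\<omega>\<in>space M. cnt Ev (0 + - (real k + 1)) (real k + - (real k + 1)) \<omega> = 0}"
    proof (rule finite_measure_mono[OF _ sets_N])
      show "NG \<subseteq> {\<omega>\<in>space M. cnt Ev (0 + - (real k + 1)) (real k + - (real k + 1)) \<omega> = 0}"
      proof
        fix \<omega> assume o: "\<omega> \<in> NG"
        then have om: "\<omega> \<in> space M" unfolding NG_def by auto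
        have "Ev \<omega> \<inter> {- (real k + 1)<..-1} = {}" using o unfolding NG_def by force
        then show "\<omega> \<in> {\<omega>\<in>space M. cnt Ev (0 + - (real k + 1)) (real k + - (real k + 1)) \<omega> = 0}"
          using cnt0_iff[OF om] om by simp
      qed
    qed
    also have "\<dots> = measure M {\<omega>\<in>space M. cnt Ev 0 (real k) \<omega> = 0}" by (rule statN)
    also have "\<dots> = (\<Sum>x\<in>set_pmf pX. q x * exp (- x * real k))" by (rule no_event_prob) simp
    also have "\<dots> \<le> (\<Sum>x\<in>set_pmf pX. q x * exp (- mn * real k))"
    proof (rule sum_mono)
      fix x assume x: "x \<in> set_pmf pX"
      have "exp (- x * real k) \<le> exp (- mn * real k)" using mn_le[OF x] by (simp add: mult_right_mono)
      then show "q x * exp (- x * real k) \<le> q x * exp (- mn * real k)" by (simp add: mult_left_mono q_nonneg)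
    qed
    also have "\<dots> = exp (- mn * real k)" using sum_q by (simp add: sum_distrib_right[symmetric])
    finally show ?thesis .
  qed
  have l: "(\<lambda>k. exp (- mn * real k)) \<longlonglongrightarrow> 0"
  proof -
    have "(\<lambda>k. exp (- mn) ^ k) \<longlonglongrightarrow> 0" by (rule LIMSEQ_power_zero) (use mn_pos in simp)
    moreover have "exp (- mn) ^ k = exp (- mn * real k)" for k by (simp add: exp_of_nat_mult[symmetric] mult.commute)
    ultimately show ?thesis by simp
  qed
  have "measure M NG \<le> 0" using LIMSEQ_le_const[OF l] le by auto
  then show ?thesis by (metis antisym measure_nonneg)
qed

end

context pfc begin

definition tauL where "tauL \<omega> = - Sup (Ev \<omega> \<inter> {..<0})"

lemma Sup_props:
  assumes om: "\<omega> \<in> space M" and ne: "Ev \<omega> \<inter> {..<0} \<noteq> {}"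
  shows "Sup (Ev \<omega> \<inter> {..<0}) \<in> Ev \<omega>" "Sup (Ev \<omega> \<inter> {..<0}) < 0"
    "\<And>e. e \<in> Ev \<omega> \<Longrightarrow> e < 0 \<Longrightarrow> e \<le> Sup (Ev \<omega> \<inter> {..<0})"
proof -
  obtain e0 where e0: "e0 \<in> Ev \<omega>" "e0 < 0" using ne by auto
  define F where "F = Ev \<omega> \<inter> {e0..<0}"
  have finF: "finite F" unfolding F_def by (rule finite_subset[OF _ locfin[OF om, of e0 0]]) auto
  have neF: "F \<noteq> {}" using e0 unfolding F_def by auto
  define m where "m = Max F"
  have mF: "m \<in> F" unfolding m_def using finF neF by (rule Max_in)
  have mge: "y \<le> m" if "y \<in> F" for y unfolding m_def using finF that by simp
  have "Sup (Ev \<omega> \<inter> {..<0}) = m"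
  proof (rule cSup_eq_maximum)
    show "m \<in> Ev \<omega> \<inter> {..<0}" using mF unfolding F_def by auto
    fix y assume y: "y \<in> Ev \<omega> \<inter> {..<0}"
    show "y \<le> m"
    proof (cases "e0 \<le> y")
      case True then show ?thesis using y mge unfolding F_def by auto
    next
      case False
      have "e0 \<le> m" using mF unfolding F_def by auto
      then show ?thesis using False by simp
    qed
  qed
  then show "Sup (Ev \<omega> \<inter> {..<0}) \<in> Ev \<omega>" "Sup (Ev \<omega> \<inter> {..<0}) < 0" using mF unfolding F_def by auto
  fix e assume "e \<in> Ev \<omega>" "e < 0"
  then show "e \<le> Sup (Ev \<omega> \<inter> {..<0})" using \<open>Sup (Ev \<omega> \<inter> {..<0}) = m\<close> mge mF unfolding F_def
    by (cases "e0 \<le> e") fastforce+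
qed

lemma tauL_le_iff:
  assumes om: "\<omega> \<in> space M" and ne: "\<omega> \<notin> NG"
  shows "tauL \<omega> \<le> t \<longleftrightarrow> \<omega> \<in> Wset t"
proof -
  have ne': "Ev \<omega> \<inter> {..<0} \<noteq> {}" using om ne unfolding NG_def by auto
  note S = Sup_props[OF om ne']
  show ?thesis
  proof
    assume "tauL \<omega> \<le> t"
    then have "- t \<le> Sup (Ev \<omega> \<inter> {..<0})" unfolding tauL_def by simp
    then show "\<omega> \<in> Wset t" unfolding Wset_def using om S(1,2) by auto
  next
    assume "\<omega> \<in> Wset t"
    then obtain e where "e \<in> Ev \<omega>" "-t \<le> e" "e < 0" unfolding Wset_def by auto
    then have "-t \<le> Sup (Ev \<omega> \<inter> {..<0})" using S(3) by force
    then show "tauL \<omega> \<le> t" unfolding tauL_def by simp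
  qed
qed

lemma Wset_NG: "Wset t \<inter> NG = {}" unfolding Wset_def NG_def by auto

lemma tauL_NG: "\<omega> \<in> NG \<Longrightarrow> tauL \<omega> = - Sup {}"
  unfolding tauL_def NG_def by auto

lemma tauL_le_set: "{\<omega>\<in>space M. tauL \<omega> \<le> t} = Wset t \<union> (if - Sup ({}::real set) \<le> t then NG else {})"
proof (intro equalityI subsetI)
  fix \<omega> assume o: "\<omega> \<in> {\<omega>\<in>space M. tauL \<omega> \<le> t}"
  show "\<omega> \<in> Wset t \<union> (if - Sup ({}::real set) \<le> t then NG else {})"
  proof (cases "\<omega> \<in> NG")
    case True then show ?thesis using o tauL_NG by auto
  next
    case False then show ?thesis using o tauL_le_iff by auto
  qed
next
  fix \<omega> assume o: "\<omega> \<in> Wset t \<union> (if - Sup ({}::real set) \<le> t then NG else {})"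
  show "\<omega> \<in> {\<omega>\<in>space M. tauL \<omega> \<le> t}"
  proof (cases "\<omega> \<in> NG")
    case True then show ?thesis using o tauL_NG Wset_NG NG_def by (auto split: if_splits)
  next
    case False
    then have "\<omega> \<in> Wset t" using o by (auto split: if_splits)
    moreover then have "\<omega> \<in> space M" unfolding Wset_def by auto
    ultimately show ?thesis using tauL_le_iff False by auto
  qed
qed

lemma tauL_meas: "tauL \<in> borel_measurable M"
proof (rule borel_measurableI_le)
  fix t
  show "{\<omega>\<in>space M. tauL \<omega> \<le> t} \<in> sets M"
    unfolding tauL_le_set using Wset_sets NG_sets by auto
qed

definition Gt where "Gt a = (if 0 \<le> a then 1 - (\<Sum>x\<in>set_pmf pX. q x * exp (- x * a)) else 0)"

lemma Wset_prob: "measure M (Wset a) = Gt a"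
proof (cases "0 \<le> a")
  case False
  then have "Wset a = {}" unfolding Wset_def by auto
  then show ?thesis using False unfolding Gt_def by simp
next
  case True
  define V where "V = {\<omega>\<in>space M. cnt Ev (-a) 0 \<omega> \<noteq> 0}"
  define P where "P u = {\<omega>\<in>space M. u \<in> Ev \<omega>}" for u
  have Vs: "V \<in> sets M" unfolding V_def by (rule sets_N)
  have Ps: "P u \<in> sets M" for u unfolding P_def by (rule pt_sets)
  have P0: "measure M (P u) = 0" for u unfolding P_def by (rule pt_null)
  have sub1: "Wset a \<subseteq> V \<union> P (-a)"
  proof
    fix \<omega> assume "\<omega> \<in> Wset a"
    then obtain e where e: "\<omega> \<in> space M" "e \<in> Ev \<omega>" "-a \<le> e" "e < 0" unfolding Wset_def by auto
    show "\<omega> \<in> V \<union> P (-a)"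
    proof (cases "e = -a")
      case True then show ?thesis using e unfolding P_def by auto
    next
      case False
      then have "e \<in> Ev \<omega> \<inter> {-a<..0}" using e by auto
      then have "cnt Ev (-a) 0 \<omega> \<noteq> 0" using cnt0_iff[OF e(1)] by blast
      then show ?thesis using e unfolding V_def by auto
    qed
  qed
  have sub2: "V \<subseteq> Wset a \<union> P 0"
  proof
    fix \<omega> assume "\<omega> \<in> V"
    then have om: "\<omega> \<in> space M" and c: "cnt Ev (-a) 0 \<omega> \<noteq> 0" unfolding V_def by auto
    then obtain e where e: "e \<in> Ev \<omega>" "-a < e" "e \<le> 0" using cnt0_iff[OF om] by auto
    show "\<omega> \<in> Wset a \<union> P 0"
    proof (cases "e = 0")
      case True then show ?thesis using e om unfolding P_def by auto
    next
      case False then show ?thesis using e om unfolding Wset_def by auto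
    qed
  qed
  have "measure M (Wset a) \<le> measure M (V \<union> P (-a))"
    by (rule finite_measure_mono[OF sub1]) (use Vs Ps in auto)
  also have "\<dots> \<le> measure M V + measure M (P (-a))" by (rule measure_Un_le[OF Vs Ps])
  finally have le1: "measure M (Wset a) \<le> measure M V" using P0 by simp
  have "measure M V \<le> measure M (Wset a \<union> P 0)"
    by (rule finite_measure_mono[OF sub2]) (use Wset_sets Ps in auto)
  also have "\<dots> \<le> measure M (Wset a) + measure M (P 0)" by (rule measure_Un_le[OF Wset_sets Ps])
  finally have le2: "measure M V \<le> measure M (Wset a)" using P0 by simp
  have "V = space M - {\<omega>\<in>space M. cnt Ev (-a) 0 \<omega> = 0}" unfolding V_def by auto
  then have "measure M V = 1 - measure M {\<omega>\<in>space M. cnt Ev (-a) 0 \<omega> = 0}"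
    using finite_measure_compl[OF sets_N] prob_space by simp
  also have "\<dots> = Gt a" unfolding Gt_def using no_event_prob_neg[OF True] True by simp
  finally show ?thesis using le1 le2 by simp
qed

lemma tauL_cdf: "measure M {\<omega>\<in>space M. tauL \<omega> \<le> a} = Gt a"
proof -
  have "measure M {\<omega>\<in>space M. tauL \<omega> \<le> a} = measure M (Wset a \<union> (if - Sup ({}::real set) \<le> a then NG else {}))"
    unfolding tauL_le_set ..
  also have "\<dots> = measure M (Wset a)"
  proof (cases "- Sup ({}::real set) \<le> a")
    case True
    then show ?thesis using finite_measure_Union[OF Wset_sets NG_sets Wset_NG] NG_null by simp
  qed simp
  finally show ?thesis using Wset_prob by simp
qed

definition ftau where
  "ftau t = (if 0 \<le> t then (\<Sum>x\<in>set_pmf pX. exp (- t * x) * pmf pX x) / measure_pmf.expectation pX (\<lambda>x. 1 / x) else 0)"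

lemma ftau_nonneg: "0 \<le> ftau t"
  unfolding ftau_def using Zs_pos Zs_eq by (auto intro!: sum_nonneg divide_nonneg_pos)

lemma ftau_meas: "ftau \<in> borel_measurable borel"
  unfolding ftau_def by measurable

lemma Fprim_deriv:
  "((\<lambda>s. - (\<Sum>y\<in>set_pmf pX. pmf pX y / y * exp (- s * y)) / Zs) has_real_derivative
     (\<Sum>y\<in>set_pmf pX. exp (- s * y) * pmf pX y) / Zs) (at s within X)"
proof -
  have d: "((\<lambda>s. \<Sum>y\<in>set_pmf pX. pmf pX y / y * exp (- s * y)) has_real_derivative
        (\<Sum>y\<in>set_pmf pX. pmf pX y / y * (exp (- s * y) * (- y)))) (at s within X)"
    by (rule DERIV_sum) (auto intro!: derivative_eq_intros)
  have e: "(\<Sum>y\<in>set_pmf pX. pmf pX y / y * (exp (- s * y) * (- y))) = - (\<Sum>y\<in>set_pmf pX. exp (- s * y) * pmf pX y)"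
    by (simp add: sum_negf[symmetric]) (rule sum.cong, use S_pos in \<open>auto simp: field_simps\<close>)
  show ?thesis using DERIV_cdivide[OF DERIV_minus[OF d], of Zs] unfolding e by simp
qed

lemma ftau_int:
  "(\<integral>\<^sup>+x. ennreal (ftau x) * indicator {..a} x \<partial>lborel) = ennreal (Gt a)"
proof (cases "0 \<le> a")
  case False
  have z: "(\<lambda>x. ennreal (ftau x) * indicator {..a} x) = (\<lambda>x. 0)"
    using False by (auto simp: fun_eq_iff ftau_def indicator_def)
  show ?thesis using False unfolding Gt_def z by simp
next
  case True
  define h where "h s = (\<Sum>y\<in>set_pmf pX. exp (- s * y) * pmf pX y) / Zs" for s
  define F where "F s = - (\<Sum>y\<in>set_pmf pX. pmf pX y / y * exp (- s * y)) / Zs" for s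
  have z: "(\<lambda>x. ennreal (ftau x) * indicator {..a} x) = (\<lambda>x. ennreal (h x) * indicator {0..a} x)"
    by (auto simp: fun_eq_iff ftau_def h_def indicator_def Zs_eq)
  have "(\<integral>\<^sup>+x. ennreal (ftau x) * indicator {..a} x \<partial>lborel) = (\<integral>\<^sup>+x. ennreal (h x) * indicator {0..a} x \<partial>lborel)"
    unfolding z ..
  also have "\<dots> = ennreal (F a - F 0)"
  proof (rule nn_integral_has_integral_lebesgue')
    show "0 \<le> h x" for x unfolding h_def using Zs_pos by (auto intro!: sum_nonneg divide_nonneg_pos)
    show "(h has_integral F a - F 0) {0..a}"
    proof (rule fundamental_theorem_of_calculus[OF True])
      fix x
      show "(F has_vector_derivative h x) (at x within {0..a})"
        unfolding F_def h_def has_real_derivative_iff_has_vector_derivative[symmetric]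
        by (rule Fprim_deriv)
    qed
  qed
  also have "F a - F 0 = Gt a"
  proof -
    have "F a - F 0 = (\<Sum>y\<in>set_pmf pX. pmf pX y / y) / Zs - (\<Sum>y\<in>set_pmf pX. pmf pX y / y * exp (- a * y)) / Zs"
      unfolding F_def by (simp add: field_simps)
    also have "(\<Sum>y\<in>set_pmf pX. pmf pX y / y) / Zs = 1"
      using Zs_pos unfolding Zs_def by simp
    also have "(\<Sum>y\<in>set_pmf pX. pmf pX y / y * exp (- a * y)) / Zs = (\<Sum>x\<in>set_pmf pX. q x * exp (- x * a))"
      unfolding sum_divide_distrib q_formula by (rule sum.cong) (auto simp: field_simps)
    finally show ?thesis unfolding Gt_def using True by simp
  qed
  finally show ?thesis .
qed

lemma part3: "distributed M lborel tauL (\<lambda>t. ennreal (ftau t))"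
proof (rule distributedI_borel_atMost[where g=Gt])
  show "tauL \<in> borel_measurable M" by (rule tauL_meas)
  show "ftau \<in> borel_measurable borel" by (rule ftau_meas)
  show "AE x in lborel. 0 \<le> ftau x" using ftau_nonneg by simp
  show "(\<integral>\<^sup>+x. ennreal (ftau x * indicator {..a} x) \<partial>lborel) = ennreal (Gt a)" for a
  proof -
    have z: "(\<lambda>x. ennreal (ftau x * indicator {..a} x)) = (\<lambda>x. ennreal (ftau x) * indicator {..a} x)"
      by (auto simp: fun_eq_iff indicator_def)
    show ?thesis unfolding z by (rule ftau_int)
  qed
  show "emeasure M {x\<in>space M. tauL x \<le> a} = ennreal (Gt a)" for a
    using tauL_cdf[of a] emeasure_eq_measure by simp
qed

end


lemma xlnx_lim: "((\<lambda>x::real. x * ln x) \<longlongrightarrow> 0) (at_right 0)"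
  by real_asymp

lemma FTC0inf:
  fixes F f :: "real \<Rightarrow> real"
  assumes F: "\<And>x. 0 < x \<Longrightarrow> DERIV F x :> f x"
    and f: "\<And>x. 0 < x \<Longrightarrow> isCont f x"
    and nn: "\<And>x. 0 < x \<Longrightarrow> 0 \<le> f x"
    and A: "(F \<longlongrightarrow> A) (at_right 0)"
    and B: "(F \<longlongrightarrow> B) at_top"
  shows "set_integrable lborel {0<..} f" "(LBINT x:{0<..}. f x) = B - A"
proof -
  have a: "(0::ereal) < \<infinity>" by simp
  have F': "\<And>x. 0 < ereal x \<Longrightarrow> ereal x < \<infinity> \<Longrightarrow> DERIV F x :> f x" using F by (simp add: zero_ereal_def)
  have f': "\<And>x. 0 < ereal x \<Longrightarrow> ereal x < \<infinity> \<Longrightarrow> isCont f x" using f by (simp add: zero_ereal_def)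
  have nn': "AE x in lborel. 0 < ereal x \<longrightarrow> ereal x < \<infinity> \<longrightarrow> 0 \<le> f x" using nn by (simp add: zero_ereal_def)
  have A': "((F \<circ> real_of_ereal) \<longlongrightarrow> A) (at_right 0)"
    using A unfolding zero_ereal_def ereal_tendsto_simps1 .
  have B': "((F \<circ> real_of_ereal) \<longlongrightarrow> B) (at_left \<infinity>)"
    using B unfolding ereal_tendsto_simps1 .
  note R = interval_integral_FTC_nonneg[OF a F' f' nn' A' B']
  show "set_integrable lborel {0<..} f" using R(1) by (simp add: zero_ereal_def)
  show "(LBINT x:{0<..}. f x) = B - A" using R(2) by (metis interval_lebesgue_integral_0_infty(2))
qed

context pfc begin

definition Sf where "Sf t = (\<Sum>x\<in>set_pmf pX. exp (- t * x) * pmf pX x)"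
definition Nf where "Nf t = (\<Sum>x\<in>set_pmf pX. x * exp (- t * x) * pmf pX x)"

lemma gfun_eq: "gfun pX t = Nf t / Sf t" unfolding gfun_def Nf_def Sf_def ..
lemma fY_eq: "fY pX t = Nf t" unfolding fY_def Nf_def by (rule sum.cong) (auto simp: mult_ac)

lemma Sf_pos: "0 < Sf t"
  unfolding Sf_def by (rule sum_pos[OF fin S_ne]) (auto simp: pmf_positive)
lemma Nf_pos: "0 < Nf t"
  unfolding Nf_def by (rule sum_pos[OF fin S_ne]) (auto simp: pmf_positive S_pos)
lemma Sf_0: "Sf 0 = 1" unfolding Sf_def using fin by (simp add: sum_pmf_eq_1)
lemma Sf_le1: "0 \<le> t \<Longrightarrow> Sf t \<le> 1"
proof -
  assume t: "0 \<le> t"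
  have "Sf t \<le> (\<Sum>x\<in>set_pmf pX. 1 * pmf pX x)" unfolding Sf_def
  proof (rule sum_mono, rule mult_right_mono)
    fix x assume x: "x \<in> set_pmf pX"
    have "0 \<le> t * x" using t S_pos[OF x] by simp
    then show "exp (- t * x) \<le> 1" by simp
  qed simp
  then show ?thesis using fin by (simp add: sum_pmf_eq_1)
qed

lemma Sf_deriv: "(Sf has_real_derivative - Nf t) (at t)"
proof -
  have "((\<lambda>t. \<Sum>x\<in>set_pmf pX. exp (- t * x) * pmf pX x) has_real_derivative
        (\<Sum>x\<in>set_pmf pX. exp (- t * x) * (- x) * pmf pX x)) (at t)"
    by (rule DERIV_sum) (auto intro!: derivative_eq_intros)
  moreover have "(\<Sum>x\<in>set_pmf pX. exp (- t * x) * (- x) * pmf pX x) = - Nf t"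
    unfolding Nf_def by (simp add: sum_negf[symmetric] mult_ac)
  ultimately show ?thesis unfolding Sf_def[abs_def] by simp
qed

lemma Sf_cont: "isCont Sf t" using DERIV_isCont[OF Sf_deriv] .
lemma Nf_cont: "isCont Nf t" unfolding Nf_def[abs_def] by (intro continuous_intros)

lemma Sf_lim0: "(Sf \<longlongrightarrow> 1) (at_right 0)"
proof -
  have "(Sf \<longlongrightarrow> Sf 0) (at 0)" using Sf_cont isCont_def by blast
  then have "(Sf \<longlongrightarrow> Sf 0) (at_right 0)" by (rule filterlim_mono) (auto simp: at_le)
  then show ?thesis using Sf_0 by simp
qed

lemma Sf_lim_top: "(Sf \<longlongrightarrow> 0) at_top"
proof -
  have e: "((\<lambda>t. exp (- t * x)) \<longlongrightarrow> 0) at_top" if x: "x \<in> set_pmf pX" for x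
    using S_pos[OF x]
    by (auto intro!: exp_at_bot[THEN filterlim_compose] filterlim_tendsto_pos_mult_at_top filterlim_ident
             simp: filterlim_uminus_at_bot mult.commute[of _ x])
  have "((\<lambda>t. \<Sum>x\<in>set_pmf pX. exp (- t * x) * pmf pX x) \<longlongrightarrow> (\<Sum>x\<in>set_pmf pX. 0 * pmf pX x)) at_top"
    by (intro tendsto_sum tendsto_mult e tendsto_const)
  then show ?thesis unfolding Sf_def[abs_def] by simp
qed

lemma Nf_int: "set_integrable lborel {0<..} Nf" "(LBINT x:{0<..}. Nf x) = 1"
proof -
  note R = FTC0inf[of "\<lambda>t. - Sf t" Nf "-1" 0]
  have d: "DERIV (\<lambda>t. - Sf t) x :> Nf x" for x using DERIV_minus[OF Sf_deriv[of x]] by simp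
  have A: "((\<lambda>t. - Sf t) \<longlongrightarrow> -1) (at_right 0)" using tendsto_minus[OF Sf_lim0] .
  have B: "((\<lambda>t. - Sf t) \<longlongrightarrow> 0) at_top" using tendsto_minus[OF Sf_lim_top] by simp
  show "set_integrable lborel {0<..} Nf" "(LBINT x:{0<..}. Nf x) = 1"
    using R[OF d Nf_cont less_imp_le[OF Nf_pos] A B] by simp_all
qed

lemma NlnS_int: "set_integrable lborel {0<..} (\<lambda>x. - (Nf x * ln (Sf x)))"
     "(LBINT x:{0<..}. - (Nf x * ln (Sf x))) = 1"
proof -
  define F where "F t = Sf t * ln (Sf t) - Sf t" for t
  have d: "DERIV F x :> - (Nf x * ln (Sf x))" for x
  proof -
    have dl: "DERIV (\<lambda>t. ln (Sf t)) x :> inverse (Sf x) * (- Nf x)"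
      by (rule DERIV_chain2[OF DERIV_ln[OF Sf_pos] Sf_deriv])
    have "DERIV F x :> (- Nf x * ln (Sf x) + inverse (Sf x) * (- Nf x) * Sf x - (- Nf x))"
      unfolding F_def[abs_def] by (rule DERIV_diff[OF DERIV_mult[OF Sf_deriv dl] Sf_deriv])
    moreover have "- Nf x * ln (Sf x) + inverse (Sf x) * (- Nf x) * Sf x - (- Nf x) = - (Nf x * ln (Sf x))"
      using Sf_pos[of x] by (simp add: field_simps)
    ultimately show ?thesis by (metis (no_types))
  qed
  have c: "isCont (\<lambda>x. - (Nf x * ln (Sf x))) x" for x
    by (intro continuous_intros Nf_cont continuous_at_compose[OF Sf_cont, unfolded o_def]) (use Sf_pos[of x] in auto)
  have nn: "0 \<le> - (Nf x * ln (Sf x))" if "0 < x" for x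
  proof -
    have "ln (Sf x) \<le> 0" using Sf_le1[of x] Sf_pos[of x] that by simp
    then show ?thesis using Nf_pos[of x] by (simp add: mult_nonneg_nonpos)
  qed
  have A: "(F \<longlongrightarrow> -1) (at_right 0)"
  proof -
    have "((\<lambda>t. Sf t * ln (Sf t) - Sf t) \<longlongrightarrow> 1 * ln 1 - 1) (at_right 0)"
      by (intro tendsto_intros Sf_lim0) simp
    then show ?thesis unfolding F_def by simp
  qed
  have B: "(F \<longlongrightarrow> 0) at_top"
  proof -
    have fl: "filterlim Sf (at_right 0) at_top"
    proof -
      have "\<forall>x. Sf x \<in> {0<..} \<and> Sf x \<noteq> 0" using Sf_pos by (simp add: less_imp_neq[symmetric])
      then have "eventually (\<lambda>x. Sf x \<in> {0<..} \<and> Sf x \<noteq> 0) at_top" by (rule always_eventually)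
      then show ?thesis unfolding filterlim_at using Sf_lim_top by simp
    qed
    have "((\<lambda>t. Sf t * ln (Sf t)) \<longlongrightarrow> 0) at_top"
      using filterlim_compose[OF xlnx_lim fl] by (simp add: o_def)
    then have "((\<lambda>t. Sf t * ln (Sf t) - Sf t) \<longlongrightarrow> 0 - 0) at_top"
      by (intro tendsto_diff Sf_lim_top)
    then show ?thesis unfolding F_def by simp
  qed
  show "set_integrable lborel {0<..} (\<lambda>x. - (Nf x * ln (Sf x)))"
       "(LBINT x:{0<..}. - (Nf x * ln (Sf x))) = 1"
    using FTC0inf[OF d c nn A B] by simp_all
qed

end

context pfc begin

lemma g_bounds: "mn \<le> Nf t / Sf t" "Nf t / Sf t \<le> Mx"
proof -
  have "mn * Sf t \<le> Nf t" unfolding Sf_def Nf_def sum_distrib_left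
    by (rule sum_mono) (auto simp: mult.assoc[symmetric] intro!: mult_right_mono mn_le)
  then show "mn \<le> Nf t / Sf t" using Sf_pos[of t] by (simp add: field_simps)
  have "Nf t \<le> Mx * Sf t" unfolding Sf_def Nf_def sum_distrib_left
    by (rule sum_mono) (auto simp: mult.assoc[symmetric] intro!: mult_right_mono le_Mx)
  then show "Nf t / Sf t \<le> Mx" using Sf_pos[of t] by (simp add: field_simps)
qed

definition Cb where "Cb = \<bar>ln mn\<bar> + \<bar>ln Mx\<bar>"

lemma ln_g_bound: "\<bar>ln (gfun pX t)\<bar> \<le> Cb"
proof -
  have p: "0 < Nf t / Sf t" using g_bounds(1)[of t] mn_pos by simp
  have "ln mn \<le> ln (Nf t / Sf t)" using g_bounds(1)[of t] mn_pos p by simp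
  moreover have "ln (Nf t / Sf t) \<le> ln Mx" using g_bounds(2)[of t] Mx_pos p by simp
  ultimately show ?thesis unfolding gfun_eq Cb_def by linarith
qed

lemma gl_meas: "(\<lambda>t. gfun pX t * ln (gfun pX t)) \<in> borel_measurable lborel"
  unfolding gfun_def by measurable

lemma int1_meas: "(\<lambda>x. indicator {0<..} x * (Nf x * ln (gfun pX x))) \<in> borel_measurable lborel"
  unfolding gfun_def Nf_def by measurable

lemma int2_meas: "(\<lambda>x. indicator {0<..} x * (Nf x * ln (Sf x))) \<in> borel_measurable lborel"
  unfolding Sf_def Nf_def by measurable

lemma int1: "integrable lborel (\<lambda>x. indicator {0<..} x * (Nf x * ln (gfun pX x)))"
proof (rule Bochner_Integration.integrable_bound)
  have "integrable lborel (\<lambda>x. indicator {0<..} x *\<^sub>R Nf x)"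
    using Nf_int(1) unfolding set_integrable_def .
  then show "integrable lborel (\<lambda>x. Cb * (indicator {0<..} x * Nf x))"
    by (intro integrable_mult_right) simp
  show "(\<lambda>x. indicator {0<..} x * (Nf x * ln (gfun pX x))) \<in> borel_measurable lborel" by (rule int1_meas)
  show "AE x in lborel. norm (indicator {0<..} x * (Nf x * ln (gfun pX x))) \<le> norm (Cb * (indicator {0<..} x * Nf x))"
  proof (rule always_eventually, rule allI)
    fix x
    have "\<bar>Nf x * ln (gfun pX x)\<bar> \<le> Nf x * Cb"
      using ln_g_bound[of x] Nf_pos[of x] by (simp add: abs_mult mult_left_mono)
    moreover have "0 \<le> Cb" unfolding Cb_def by simp
    ultimately show "norm (indicator {0<..} x * (Nf x * ln (gfun pX x))) \<le> norm (Cb * (indicator {0<..} x * Nf x))"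
      using Nf_pos[of x] by (auto simp: indicator_def abs_mult mult.commute)
  qed
qed

lemma int2: "integrable lborel (\<lambda>x. indicator {0<..} x * (Nf x * ln (Sf x)))"
      "(\<integral>x. indicator {0<..} x * (Nf x * ln (Sf x)) \<partial>lborel) = -1"
proof -
  have i: "integrable lborel (\<lambda>x. indicator {0<..} x *\<^sub>R (- (Nf x * ln (Sf x))))"
    using NlnS_int(1) unfolding set_integrable_def .
  have e: "(\<lambda>x. indicator {0<..} x * (Nf x * ln (Sf x))) = (\<lambda>x. - (indicator {0<..} x *\<^sub>R (- (Nf x * ln (Sf x)))))"
    by (auto simp: fun_eq_iff)
  show "integrable lborel (\<lambda>x. indicator {0<..} x * (Nf x * ln (Sf x)))"
    unfolding e by (rule integrable_minus[OF i])
  have "(\<integral>x. indicator {0<..} x *\<^sub>R (- (Nf x * ln (Sf x))) \<partial>lborel) = 1"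
    using NlnS_int(2) unfolding set_lebesgue_integral_def .
  then show "(\<integral>x. indicator {0<..} x * (Nf x * ln (Sf x)) \<partial>lborel) = -1"
    unfolding e by simp
qed

lemma hY_eq: "hY pX = - ((\<integral>x. indicator {0<..} x * (Nf x * ln (gfun pX x)) \<partial>lborel) - 1)"
proof -
  have "(LBINT y:{0..}. fY pX y * ln (fY pX y))
      = (\<integral>x. indicator {0<..} x * (Nf x * ln (gfun pX x)) + indicator {0<..} x * (Nf x * ln (Sf x)) \<partial>lborel)"
    unfolding set_lebesgue_integral_def
  proof (rule integral_cong_AE)
    show "(\<lambda>x. indicator {0..} x *\<^sub>R (fY pX x * ln (fY pX x))) \<in> borel_measurable lborel"
      unfolding fY_def by measurable
    show "(\<lambda>x. indicator {0<..} x * (Nf x * ln (gfun pX x)) + indicator {0<..} x * (Nf x * ln (Sf x))) \<in> borel_measurable lborel"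
      using int1_meas int2_meas by measurable
    show "AE x in lborel. indicator {0..} x *\<^sub>R (fY pX x * ln (fY pX x)) =
        indicator {0<..} x * (Nf x * ln (gfun pX x)) + indicator {0<..} x * (Nf x * ln (Sf x))"
      using AE_lborel_singleton[of 0]
    proof (rule AE_mp, intro always_eventually allI impI)
      fix x :: real assume x0: "x \<noteq> 0"
      have "ln (Nf x) = ln (Nf x / Sf x) + ln (Sf x)"
        using Nf_pos[of x] Sf_pos[of x] by (simp add: ln_div)
      then have "Nf x * ln (Nf x) = Nf x * ln (gfun pX x) + Nf x * ln (Sf x)"
        unfolding gfun_eq by (simp add: distrib_left)
      then show "indicator {0..} x *\<^sub>R (fY pX x * ln (fY pX x)) =
        indicator {0<..} x * (Nf x * ln (gfun pX x)) + indicator {0<..} x * (Nf x * ln (Sf x))"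
        using x0 unfolding fY_eq by (auto simp: indicator_def)
    qed
  qed
  also have "\<dots> = (\<integral>x. indicator {0<..} x * (Nf x * ln (gfun pX x)) \<partial>lborel) - 1"
    using Bochner_Integration.integral_add[OF int1 int2(1)] int2(2) by simp
  finally show ?thesis unfolding hY_def by simp
qed

lemma part4: "expectation (\<lambda>\<omega>. gfun pX (tauL \<omega>) * ln (gfun pX (tauL \<omega>)))
     = (1 - hY pX) / measure_pmf.expectation pX (\<lambda>x. 1 / x)"
proof -
  have "(\<integral>x. ftau x * (gfun pX x * ln (gfun pX x)) \<partial>lborel) = expectation (\<lambda>\<omega>. gfun pX (tauL \<omega>) * ln (gfun pX (tauL \<omega>)))"
    by (rule distributed_integral[OF part3 gl_meas ftau_nonneg])
  moreover have "(\<integral>x. ftau x * (gfun pX x * ln (gfun pX x)) \<partial>lborel)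
      = (\<integral>x. indicator {0<..} x * (Nf x * ln (gfun pX x)) / Zs \<partial>lborel)"
  proof (rule integral_cong_AE)
    show "(\<lambda>x. ftau x * (gfun pX x * ln (gfun pX x))) \<in> borel_measurable lborel"
      using ftau_meas gl_meas by measurable
    show "(\<lambda>x. indicator {0<..} x * (Nf x * ln (gfun pX x)) / Zs) \<in> borel_measurable lborel"
      using int1_meas by measurable
    show "AE x in lborel. ftau x * (gfun pX x * ln (gfun pX x)) = indicator {0<..} x * (Nf x * ln (gfun pX x)) / Zs"
      using AE_lborel_singleton[of 0]
    proof (rule AE_mp, intro always_eventually allI impI)
      fix x :: real assume x0: "x \<noteq> 0"
      show "ftau x * (gfun pX x * ln (gfun pX x)) = indicator {0<..} x * (Nf x * ln (gfun pX x)) / Zs"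
      proof (cases "0 < x")
        case True
        have "ftau x = Sf x / Zs" unfolding ftau_def Sf_def Zs_eq using True by simp
        then show ?thesis using True Sf_pos[of x] unfolding gfun_eq by (simp add: field_simps)
      next
        case False then show ?thesis using x0 unfolding ftau_def by simp
      qed
    qed
  qed
  ultimately have "expectation (\<lambda>\<omega>. gfun pX (tauL \<omega>) * ln (gfun pX (tauL \<omega>)))
      = (\<integral>x. indicator {0<..} x * (Nf x * ln (gfun pX x)) \<partial>lborel) / Zs" by simp
  then show ?thesis unfolding hY_eq Zs_eq by simp
qed

end

theorem lemma3:
  fixes pX :: "real pmf" and M :: "'w measure"
    and Xp :: "real \<Rightarrow> 'w \<Rightarrow> real" and Ev :: "'w \<Rightarrow> real set"
  assumes fin: "finite (set_pmf pX)"
    and pos: "set_pmf pX \<subseteq> {0<..}"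
    and chan: "poisson_feedback_channel pX M Xp Ev"
  defines "tau \<equiv> (\<lambda>\<omega>. - Sup (Ev \<omega> \<inter> {..<0}))"
  shows "(\<forall>t x. measure M {\<omega> \<in> space M. Xp t \<omega> = x}
            = ((1 / x) * pmf pX x) / (\<Sum>x'\<in>set_pmf pX. (1 / x') * pmf pX x'))
       \<and> (\<forall>t. prob_space.expectation M (\<lambda>\<omega>. Xp t \<omega> * ln (Xp t \<omega>))
            = measure_pmf.expectation pX ln / measure_pmf.expectation pX (\<lambda>x. 1 / x))
       \<and> distributed M lborel tau
           (\<lambda>t. ennreal (if 0 \<le> t then (\<Sum>x\<in>set_pmf pX. exp (- t * x) * pmf pX x)
                                        / measure_pmf.expectation pX (\<lambda>x. 1 / x) else 0))
       \<and> prob_space.expectation M (\<lambda>\<omega>. gfun pX (tau \<omega>) * ln (gfun pX (tau \<omega>)))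
           = (1 - hY pX) / measure_pmf.expectation pX (\<lambda>x. 1 / x)"
proof -
  interpret P: pfc pX M Xp Ev using fin pos chan by unfold_locales
  have te: "tau = P.tauL" unfolding tau_def P.tauL_def[abs_def] ..
  show ?thesis
    unfolding te
    using P.part1 P.part2 P.part3[unfolded P.ftau_def] P.part4 by blast
qed


end
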